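(* Let $(\mathcal{M},\times,1)$ be a cartesian monoidal category with equivalences. Then there is an isomorphism of categories \[ \mathrm{HtyAlg}(\mathbf{CMon},\mathcal{M})\;\cong\;\mathbf{Special}(\Gamma^{\mathrm{op}},\mathcal{M}). \]
   Context: A monoidal category with equivalences is a monoidal category with a class of morphisms (equivalences) containing all isomorphisms, satisfying two-out-of-three under composition, and closed under $\otimes$; cartesian means the monoidal structure is given by chosen finite products. $\Phi$: objects $n=\{0,\dots,n-1\}$ ($n\ge0$), all functions, symmetric monoidal under disjoint union $+$ with unit $0$. $\mathrm{HtyAlg}(\mathbf{CMon},\mathcal{M})$ (homotopy commutative monoids in $\mathcal{M}$) is the category whose objects are colax symmetric monoidal functors $(X,\xi):(\Phi,+,0)\to(\mathcal{M},\times,1)$ (a functor $X$ with natural maps $\xi_{m,n}:X(m+n)\to X(m)\times X(n)$ and $\xi_0:X(0)\to1$ satisfying coassociativity, counit and symmetry axioms, not necessarily invertible) in which $\xi_0$ and all $\xi_{m,n}$ are equivalences, and whose morphisms are monoidal transformations (natural transformations $\sigma$ compatible with the $\xi$'s: $\xi'_{m,n}\sigma_{m+n}=(\sigma_m\times\sigma_n)\xi_{m,n}$, $\xi'_0\sigma_0=\xi_0$). $\Gamma^{\mathrm{op}}$: objects $[n]=\{0,\dots,n\}$, morphisms basepoint-preserving functions. A special $\Gamma$-object in $\mathcal{M}$ is a functor $Y:\Gamma^{\mathrm{op}}\to\mathcal{M}$ such that for every $n\ge0$ the map $(Y(\rho^n_0),\dots,Y(\rho^n_{n-1})):Y[n]\to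 Y[1]^n$ is an equivalence, where $\rho^n_j:[n]\to[1]$ sends $j+1$ to $1$ and everything else to $0$ (equivalently: for all $m,n$ the map $(Y(\pi^1_{m,n}),Y(\pi^2_{m,n})):Y[m+n]\to Y[m]\times Y[n]$ and $Y[0]\to1$ are equivalences, with $\pi^1_{m,n}$ collapsing $m+1,\dots,m+n$ to $0$ and fixing $0,\dots,m$, and $\pi^2_{m,n}$ collapsing $0,\dots,m$ to $0$ and sending $i>m$ to $i-m$). $\mathbf{Special}(\Gamma^{\mathrm{op}},\mathcal{M})$ is the category of special $\Gamma$-objects and natural transformations. *)

theory Defs
  imports Main "HOL-Library.FuncSet"
begin

text \<open>A category is given by objects, arrows, domain/codomain, identities and composition
  (c_comp g f means g after f).\<close>

record ('o, 'm) ccat =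
  c_ob   :: "'o set"
  c_arr  :: "'m set"
  c_dom  :: "'m \<Rightarrow> 'o"
  c_cod  :: "'m \<Rightarrow> 'o"
  c_id   :: "'o \<Rightarrow> 'm"
  c_comp :: "'m \<Rightarrow> 'm \<Rightarrow> 'm"
  c_prod :: "'o \<Rightarrow> 'o \<Rightarrow> 'o"
  c_one  :: "'o"
  c_pr1  :: "'o \<Rightarrow> 'o \<Rightarrow> 'm"
  c_pr2  :: "'o \<Rightarrow> 'o \<Rightarrow> 'm"
  c_pair :: "'m \<Rightarrow> 'm \<Rightarrow> 'm"
  c_bang :: "'o \<Rightarrow> 'm"

definition c_hom :: "('o, 'm) ccat \<Rightarrow> 'o \<Rightarrow> 'o \<Rightarrow> 'm set" where
  "c_hom C a b = {f \<in> c_arr C. c_dom C f = a \<and> c_cod C f = b}"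

definition is_category :: "('o, 'm) ccat \<Rightarrow> bool" where
  "is_category C \<longleftrightarrow>
     (\<forall>f \<in> c_arr C. c_dom C f \<in> c_ob C \<and> c_cod C f \<in> c_ob C) \<and>
     (\<forall>a \<in> c_ob C. c_id C a \<in> c_hom C a a) \<and>
     (\<forall>a b c f g. f \<in> c_hom C a b \<longrightarrow> g \<in> c_hom C b c \<longrightarrow> c_comp C g f \<in> c_hom C a c) \<and>
     (\<forall>a b f. f \<in> c_hom C a b \<longrightarrow> c_comp C f (c_id C a) = f \<and> c_comp C (c_id C b) f = f) \<and>
     (\<forall>a b c d f g h. f \<in> c_hom C a b \<longrightarrow> g \<in> c_hom C b c \<longrightarrow> h \<in> c_hom C c d \<longrightarrow>
        c_comp C h (c_comp C g f) = c_comp C (c_comp C h g) f)"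

definition has_chosen_finite_products :: "('o, 'm) ccat \<Rightarrow> bool" where
  "has_chosen_finite_products C \<longleftrightarrow>
     c_one C \<in> c_ob C \<and>
     (\<forall>a \<in> c_ob C. c_bang C a \<in> c_hom C a (c_one C)) \<and>
     (\<forall>a f. f \<in> c_hom C a (c_one C) \<longrightarrow> f = c_bang C a) \<and>
     (\<forall>a \<in> c_ob C. \<forall>b \<in> c_ob C.
        c_prod C a b \<in> c_ob C \<and>
        c_pr1 C a b \<in> c_hom C (c_prod C a b) a \<and>
        c_pr2 C a b \<in> c_hom C (c_prod C a b) b) \<and>
     (\<forall>a b c f g. f \<in> c_hom C c a \<longrightarrow> g \<in> c_hom C c b \<longrightarrow>
        c_pair C f g \<in> c_hom C c (c_prod C a b) \<and>
        c_comp C (c_pr1 C a b) (c_pair C f g) = f \<and>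
        c_comp C (c_pr2 C a b) (c_pair C f g) = g) \<and>
     (\<forall>a b c h. a \<in> c_ob C \<longrightarrow> b \<in> c_ob C \<longrightarrow> h \<in> c_hom C c (c_prod C a b) \<longrightarrow>
        h = c_pair C (c_comp C (c_pr1 C a b) h) (c_comp C (c_pr2 C a b) h))"

definition c_tensor :: "('o, 'm) ccat \<Rightarrow> 'm \<Rightarrow> 'm \<Rightarrow> 'm" where
  "c_tensor C f g =
     c_pair C (c_comp C f (c_pr1 C (c_dom C f) (c_dom C g)))
              (c_comp C g (c_pr2 C (c_dom C f) (c_dom C g)))"

definition c_iso :: "('o, 'm) ccat \<Rightarrow> 'm \<Rightarrow> bool" where
  "c_iso C f \<longleftrightarrow> f \<in> c_arr C \<and>
     (\<exists>g \<in> c_hom C (c_cod C f) (c_dom C f).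
        c_comp C g f = c_id C (c_dom C f) \<and> c_comp C f g = c_id C (c_cod C f))"

definition cartesian_cat_with_equivalences :: "('o, 'm) ccat \<Rightarrow> 'm set \<Rightarrow> bool" where
  "cartesian_cat_with_equivalences C W \<longleftrightarrow>
     is_category C \<and> has_chosen_finite_products C \<and>
     W \<subseteq> c_arr C \<and>
     (\<forall>f. c_iso C f \<longrightarrow> f \<in> W) \<and>
     (\<forall>f g. f \<in> c_arr C \<longrightarrow> g \<in> c_arr C \<longrightarrow> c_cod C f = c_dom C g \<longrightarrow>
        ((f \<in> W \<and> g \<in> W \<longrightarrow> c_comp C g f \<in> W) \<and>
         (f \<in> W \<and> c_comp C g f \<in> W \<longrightarrow> g \<in> W) \<and>
         (g \<in> W \<and> c_comp C g f \<in> W \<longrightarrow> f \<in> W))) \<and>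
     (\<forall>f g. f \<in> W \<longrightarrow> g \<in> W \<longrightarrow> c_tensor C f g \<in> W)"

definition c_assoc :: "('o, 'm) ccat \<Rightarrow> 'o \<Rightarrow> 'o \<Rightarrow> 'o \<Rightarrow> 'm" where
  \<comment> \<open>a \<times> (b \<times> c) \<rightarrow> (a \<times> b) \<times> c\<close>
  "c_assoc C a b c =
     c_pair C (c_pair C (c_pr1 C a (c_prod C b c))
                        (c_comp C (c_pr1 C b c) (c_pr2 C a (c_prod C b c))))
              (c_comp C (c_pr2 C b c) (c_pr2 C a (c_prod C b c)))"

definition c_swap :: "('o, 'm) ccat \<Rightarrow> 'o \<Rightarrow> 'o \<Rightarrow> 'm" where
  "c_swap C a b = c_pair C (c_pr2 C a b) (c_pr1 C a b)"

section \<open>The category Phi: objects n = {0..n-1}, all functions\<close>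

definition phi_hom :: "nat \<Rightarrow> nat \<Rightarrow> (nat \<Rightarrow> nat) set" where
  "phi_hom m n = {..<m} \<rightarrow> {..<n}"

text \<open>Disjoint union of maps f : m \<rightarrow> m', g : n \<rightarrow> n', as a map m+n \<rightarrow> m'+n'.\<close>
definition phi_plus :: "nat \<Rightarrow> nat \<Rightarrow> (nat \<Rightarrow> nat) \<Rightarrow> (nat \<Rightarrow> nat) \<Rightarrow> nat \<Rightarrow> nat" where
  "phi_plus m m' f g = (\<lambda>i. if i < m then f i else m' + g (i - m))"

definition phi_twist :: "nat \<Rightarrow> nat \<Rightarrow> nat \<Rightarrow> nat" where
  "phi_twist m n = (\<lambda>i. if i < m then n + i else i - m)"

text \<open>Arrows of Phi are functions on {0..<m}; XM m n f depends only on the restriction of f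
  to {0..<m}, and is normalised to undefined on non-arrows (so that the functor is
  determined by its genuine data).\<close>

definition phi_functor :: "('o, 'm) ccat \<Rightarrow> (nat \<Rightarrow> 'o) \<Rightarrow> (nat \<Rightarrow> nat \<Rightarrow> (nat \<Rightarrow> nat) \<Rightarrow> 'm) \<Rightarrow> bool" where
  "phi_functor C XO XM \<longleftrightarrow>
     (\<forall>n. XO n \<in> c_ob C) \<and>
     (\<forall>m n f. f \<in> phi_hom m n \<longrightarrow> XM m n f \<in> c_hom C (XO m) (XO n)) \<and>
     (\<forall>m n f g. (\<forall>i<m. f i = g i) \<longrightarrow> XM m n f = XM m n g) \<and>
     (\<forall>m n f. f \<notin> phi_hom m n \<longrightarrow> XM m n f = undefined) \<and>
     (\<forall>n. XM n n id = c_id C (XO n)) \<and>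
     (\<forall>m n k f g. f \<in> phi_hom m n \<longrightarrow> g \<in> phi_hom n k \<longrightarrow>
        XM m k (g \<circ> f) = c_comp C (XM n k g) (XM m n f))"

text \<open>Objects of HtyAlg(CMon, C): colax symmetric monoidal functors (X, xi) from (Phi,+,0) to
  (C,\<times>,1) whose structure maps are equivalences. An object is a tuple (XO, XM, xi, xi0).\<close>

type_synonym ('o, 'm) hty_obj =
  "(nat \<Rightarrow> 'o) \<times> (nat \<Rightarrow> nat \<Rightarrow> (nat \<Rightarrow> nat) \<Rightarrow> 'm) \<times> (nat \<Rightarrow> nat \<Rightarrow> 'm) \<times> 'm"

definition hty_obj :: "('o, 'm) ccat \<Rightarrow> 'm set \<Rightarrow> ('o, 'm) hty_obj \<Rightarrow> bool" where
  "hty_obj C W X \<longleftrightarrow> (case X of (XO, XM, xi, xi0) \<Rightarrow>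
     phi_functor C XO XM \<and>
     \<comment> \<open>structure maps\<close>
     (\<forall>m n. xi m n \<in> c_hom C (XO (m + n)) (c_prod C (XO m) (XO n))) \<and>
     xi0 \<in> c_hom C (XO 0) (c_one C) \<and>
     \<comment> \<open>naturality of xi\<close>
     (\<forall>m m' n n' f g. f \<in> phi_hom m m' \<longrightarrow> g \<in> phi_hom n n' \<longrightarrow>
        c_comp C (xi m' n') (XM (m + n) (m' + n') (phi_plus m m' f g)) =
        c_comp C (c_tensor C (XM m m' f) (XM n n' g)) (xi m n)) \<and>
     \<comment> \<open>coassociativity\<close>
     (\<forall>l m n.
        c_comp C (c_tensor C (xi l m) (c_id C (XO n))) (xi (l + m) n) =
        c_comp C (c_assoc C (XO l) (XO m) (XO n))
          (c_comp C (c_tensor C (c_id C (XO l)) (xi m n)) (xi l (m + n)))) \<and>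
     \<comment> \<open>counit axioms\<close>
     (\<forall>n. c_comp C (c_tensor C xi0 (c_id C (XO n))) (xi 0 n) =
          c_pair C (c_bang C (XO n)) (c_id C (XO n))) \<and>
     (\<forall>n. c_comp C (c_tensor C (c_id C (XO n)) xi0) (xi n 0) =
          c_pair C (c_id C (XO n)) (c_bang C (XO n))) \<and>
     \<comment> \<open>symmetry\<close>
     (\<forall>m n. c_comp C (c_swap C (XO m) (XO n)) (xi m n) =
          c_comp C (xi n m) (XM (m + n) (n + m) (phi_twist m n))) \<and>
     \<comment> \<open>homotopy condition: structure maps are equivalences\<close>
     xi0 \<in> W \<and> (\<forall>m n. xi m n \<in> W))"

definition hty_mor :: "('o, 'm) ccat \<Rightarrow> 'm set \<Rightarrow> ('o, 'm) hty_obj \<Rightarrow> ('o, 'm) hty_obj \<Rightarrow> (nat \<Rightarrow> 'm) \<Rightarrow> bool" where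
  "hty_mor C W X X' \<sigma> \<longleftrightarrow> hty_obj C W X \<and> hty_obj C W X' \<and>
     (case X of (XO, XM, xi, xi0) \<Rightarrow> case X' of (XO', XM', xi', xi0') \<Rightarrow>
       (\<forall>n. \<sigma> n \<in> c_hom C (XO n) (XO' n)) \<and>
       (\<forall>m n f. f \<in> phi_hom m n \<longrightarrow> c_comp C (XM' m n f) (\<sigma> m) = c_comp C (\<sigma> n) (XM m n f)) \<and>
       (\<forall>m n. c_comp C (xi' m n) (\<sigma> (m + n)) = c_comp C (c_tensor C (\<sigma> m) (\<sigma> n)) (xi m n)) \<and>
       c_comp C xi0' (\<sigma> 0) = xi0)"

definition hty_id :: "('o, 'm) ccat \<Rightarrow> ('o, 'm) hty_obj \<Rightarrow> nat \<Rightarrow> 'm" where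
  "hty_id C X = (\<lambda>n. c_id C (fst X n))"

section \<open>Gamma^op: objects [n] = {0..n}, basepoint-preserving maps\<close>

definition gam_hom :: "nat \<Rightarrow> nat \<Rightarrow> (nat \<Rightarrow> nat) set" where
  "gam_hom m n = {f \<in> {..m} \<rightarrow> {..n}. f 0 = 0}"

definition gam_functor :: "('o, 'm) ccat \<Rightarrow> (nat \<Rightarrow> 'o) \<Rightarrow> (nat \<Rightarrow> nat \<Rightarrow> (nat \<Rightarrow> nat) \<Rightarrow> 'm) \<Rightarrow> bool" where
  "gam_functor C YO YM \<longleftrightarrow>
     (\<forall>n. YO n \<in> c_ob C) \<and>
     (\<forall>m n f. f \<in> gam_hom m n \<longrightarrow> YM m n f \<in> c_hom C (YO m) (YO n)) \<and>
     (\<forall>m n f g. (\<forall>i\<le>m. f i = g i) \<longrightarrow> YM m n f = YM m n g) \<and>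
     (\<forall>m n f. f \<notin> gam_hom m n \<longrightarrow> YM m n f = undefined) \<and>
     (\<forall>n. YM n n id = c_id C (YO n)) \<and>
     (\<forall>m n k f g. f \<in> gam_hom m n \<longrightarrow> g \<in> gam_hom n k \<longrightarrow>
        YM m k (g \<circ> f) = c_comp C (YM n k g) (YM m n f))"

definition gam_rho :: "nat \<Rightarrow> nat \<Rightarrow> nat \<Rightarrow> nat" where
  "gam_rho n j = (\<lambda>i. if i = j + 1 then 1 else 0)"

fun c_pow :: "('o, 'm) ccat \<Rightarrow> 'o \<Rightarrow> nat \<Rightarrow> 'o" where
  "c_pow C a 0 = c_one C"
| "c_pow C a (Suc k) = c_prod C a (c_pow C a k)"

fun c_tuple :: "('o, 'm) ccat \<Rightarrow> 'o \<Rightarrow> (nat \<Rightarrow> 'm) \<Rightarrow> nat \<Rightarrow> 'm" where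
  "c_tuple C a fs 0 = c_bang C a"
| "c_tuple C a fs (Suc k) = c_pair C (fs 0) (c_tuple C a (\<lambda>j. fs (Suc j)) k)"

type_synonym ('o, 'm) gam_obj = "(nat \<Rightarrow> 'o) \<times> (nat \<Rightarrow> nat \<Rightarrow> (nat \<Rightarrow> nat) \<Rightarrow> 'm)"

text \<open>Special Gamma-objects: (Y rho^n_0, ..., Y rho^n_{n-1}) : Y[n] \<rightarrow> Y[1]^n is an equivalence.\<close>
definition special_obj :: "('o, 'm) ccat \<Rightarrow> 'm set \<Rightarrow> ('o, 'm) gam_obj \<Rightarrow> bool" where
  "special_obj C W Y \<longleftrightarrow> (case Y of (YO, YM) \<Rightarrow>
     gam_functor C YO YM \<and>
     (\<forall>n. c_tuple C (YO n) (\<lambda>j. YM n 1 (gam_rho n j)) n \<in> W))"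

definition special_mor :: "('o, 'm) ccat \<Rightarrow> 'm set \<Rightarrow> ('o, 'm) gam_obj \<Rightarrow> ('o, 'm) gam_obj \<Rightarrow> (nat \<Rightarrow> 'm) \<Rightarrow> bool" where
  "special_mor C W Y Y' \<tau> \<longleftrightarrow> special_obj C W Y \<and> special_obj C W Y' \<and>
     (case Y of (YO, YM) \<Rightarrow> case Y' of (YO', YM') \<Rightarrow>
       (\<forall>n. \<tau> n \<in> c_hom C (YO n) (YO' n)) \<and>
       (\<forall>m n f. f \<in> gam_hom m n \<longrightarrow> c_comp C (YM' m n f) (\<tau> m) = c_comp C (\<tau> n) (YM m n f)))"

definition special_id :: "('o, 'm) ccat \<Rightarrow> ('o, 'm) gam_obj \<Rightarrow> nat \<Rightarrow> 'm" where
  "special_id C Y = (\<lambda>n. c_id C (fst Y n))"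

definition nt_comp :: "('o, 'm) ccat \<Rightarrow> (nat \<Rightarrow> 'm) \<Rightarrow> (nat \<Rightarrow> 'm) \<Rightarrow> nat \<Rightarrow> 'm" where
  "nt_comp C \<tau> \<sigma> = (\<lambda>n. c_comp C (\<tau> n) (\<sigma> n))"

definition hty_iso_special :: "('o, 'm) ccat \<Rightarrow> 'm set \<Rightarrow> bool" where
  "hty_iso_special C W \<longleftrightarrow>
   (\<exists>(Fo :: ('o, 'm) hty_obj \<Rightarrow> ('o, 'm) gam_obj)
      (Fm :: ('o, 'm) hty_obj \<Rightarrow> ('o, 'm) hty_obj \<Rightarrow> (nat \<Rightarrow> 'm) \<Rightarrow> nat \<Rightarrow> 'm)
      (Go :: ('o, 'm) gam_obj \<Rightarrow> ('o, 'm) hty_obj)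
      (Gm :: ('o, 'm) gam_obj \<Rightarrow> ('o, 'm) gam_obj \<Rightarrow> (nat \<Rightarrow> 'm) \<Rightarrow> nat \<Rightarrow> 'm).
     \<comment> \<open>F is a functor HtyAlg \<rightarrow> Special\<close>
     (\<forall>X. hty_obj C W X \<longrightarrow> special_obj C W (Fo X)) \<and>
     (\<forall>X X' \<sigma>. hty_mor C W X X' \<sigma> \<longrightarrow> special_mor C W (Fo X) (Fo X') (Fm X X' \<sigma>)) \<and>
     (\<forall>X. hty_obj C W X \<longrightarrow> Fm X X (hty_id C X) = special_id C (Fo X)) \<and>
     (\<forall>X X' X'' \<sigma> \<tau>. hty_mor C W X X' \<sigma> \<longrightarrow> hty_mor C W X' X'' \<tau> \<longrightarrow>
        Fm X X'' (nt_comp C \<tau> \<sigma>) = nt_comp C (Fm X' X'' \<tau>) (Fm X X' \<sigma>)) \<and>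
     \<comment> \<open>G is a functor Special \<rightarrow> HtyAlg\<close>
     (\<forall>Y. special_obj C W Y \<longrightarrow> hty_obj C W (Go Y)) \<and>
     (\<forall>Y Y' \<tau>. special_mor C W Y Y' \<tau> \<longrightarrow> hty_mor C W (Go Y) (Go Y') (Gm Y Y' \<tau>)) \<and>
     (\<forall>Y. special_obj C W Y \<longrightarrow> Gm Y Y (special_id C Y) = hty_id C (Go Y)) \<and>
     (\<forall>Y Y' Y'' \<sigma> \<tau>. special_mor C W Y Y' \<sigma> \<longrightarrow> special_mor C W Y' Y'' \<tau> \<longrightarrow>
        Gm Y Y'' (nt_comp C \<tau> \<sigma>) = nt_comp C (Gm Y' Y'' \<tau>) (Gm Y Y' \<sigma>)) \<and>
     \<comment> \<open>G \<circ> F = Id and F \<circ> G = Id\<close>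
     (\<forall>X. hty_obj C W X \<longrightarrow> Go (Fo X) = X) \<and>
     (\<forall>X X' \<sigma>. hty_mor C W X X' \<sigma> \<longrightarrow> Gm (Fo X) (Fo X') (Fm X X' \<sigma>) = \<sigma>) \<and>
     (\<forall>Y. special_obj C W Y \<longrightarrow> Fo (Go Y) = Y) \<and>
     (\<forall>Y Y' \<tau>. special_mor C W Y Y' \<tau> \<longrightarrow> Fm (Go Y) (Go Y') (Gm Y Y' \<tau>) = \<tau>))"

end

theory Submission
  imports Defs
begin

locale ccw =
  fixes C :: "('o, 'm) ccat" and W :: "'m set"
  assumes ccw: "cartesian_cat_with_equivalences C W"
begin

abbreviation "ob \<equiv> c_ob C"
abbreviation "ar \<equiv> c_arr C"
abbreviation "dm \<equiv> c_dom C"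
abbreviation "cd \<equiv> c_cod C"
abbreviation "cid \<equiv> c_id C"
abbreviation "cmp \<equiv> c_comp C"
abbreviation "prd \<equiv> c_prod C"
abbreviation "one \<equiv> c_one C"
abbreviation "pr1 \<equiv> c_pr1 C"
abbreviation "pr2 \<equiv> c_pr2 C"
abbreviation "pa \<equiv> c_pair C"
abbreviation "bg \<equiv> c_bang C"
abbreviation "tn \<equiv> c_tensor C"

lemma cat: "is_category C" and fp: "has_chosen_finite_products C"
  using ccw unfolding cartesian_cat_with_equivalences_def by auto

lemma hom_iff: "f \<in> c_hom C a b \<longleftrightarrow> f \<in> ar \<and> dm f = a \<and> cd f = b"
  by (simp add: c_hom_def)

lemma dm_ob[simp]: "f \<in> ar \<Longrightarrow> dm f \<in> ob" and cd_ob[simp]: "f \<in> ar \<Longrightarrow> cd f \<in> ob"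
  using cat unfolding is_category_def by auto

lemma id_ar[simp]: "a \<in> ob \<Longrightarrow> cid a \<in> ar"
  and id_dm[simp]: "a \<in> ob \<Longrightarrow> dm (cid a) = a"
  and id_cd[simp]: "a \<in> ob \<Longrightarrow> cd (cid a) = a"
  using cat unfolding is_category_def hom_iff by auto

lemma cmp_ar[simp]: "f \<in> ar \<Longrightarrow> g \<in> ar \<Longrightarrow> cd f = dm g \<Longrightarrow> cmp g f \<in> ar"
  and cmp_dm[simp]: "f \<in> ar \<Longrightarrow> g \<in> ar \<Longrightarrow> cd f = dm g \<Longrightarrow> dm (cmp g f) = dm f"
  and cmp_cd[simp]: "f \<in> ar \<Longrightarrow> g \<in> ar \<Longrightarrow> cd f = dm g \<Longrightarrow> cd (cmp g f) = cd g"
proof -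
  assume "f \<in> ar" "g \<in> ar" "cd f = dm g"
  then have "f \<in> c_hom C (dm f) (cd f)" "g \<in> c_hom C (cd f) (cd g)" by (auto simp: hom_iff)
  then have "cmp g f \<in> c_hom C (dm f) (cd g)" using cat unfolding is_category_def by blast
  then show "cmp g f \<in> ar" "dm (cmp g f) = dm f" "cd (cmp g f) = cd g" by (auto simp: hom_iff)
qed

lemma id_l[simp]: "f \<in> ar \<Longrightarrow> cd f = a \<Longrightarrow> cmp (cid a) f = f"
  and id_r[simp]: "f \<in> ar \<Longrightarrow> dm f = a \<Longrightarrow> cmp f (cid a) = f"
  using cat unfolding is_category_def hom_iff by auto

lemma assoc: "f \<in> ar \<Longrightarrow> g \<in> ar \<Longrightarrow> h \<in> ar \<Longrightarrow> cd f = dm g \<Longrightarrow> cd g = dm h \<Longrightarrow>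
   cmp (cmp h g) f = cmp h (cmp g f)"
proof -
  assume a: "f \<in> ar" "g \<in> ar" "h \<in> ar" "cd f = dm g" "cd g = dm h"
  then have "f \<in> c_hom C (dm f) (cd f)" "g \<in> c_hom C (cd f) (cd g)" "h \<in> c_hom C (cd g) (cd h)"
    by (auto simp: hom_iff)
  then show ?thesis using cat unfolding is_category_def by metis
qed

lemma one_ob[simp]: "one \<in> ob"
  and bg_ar[simp]: "a \<in> ob \<Longrightarrow> bg a \<in> ar"
  and bg_dm[simp]: "a \<in> ob \<Longrightarrow> dm (bg a) = a"
  and bg_cd[simp]: "a \<in> ob \<Longrightarrow> cd (bg a) = one"
  using fp unfolding has_chosen_finite_products_def hom_iff by auto

lemma bg_uniq: "f \<in> ar \<Longrightarrow> cd f = one \<Longrightarrow> f = bg (dm f)"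
  using fp unfolding has_chosen_finite_products_def hom_iff by auto

lemma prd_ob[simp]: "a \<in> ob \<Longrightarrow> b \<in> ob \<Longrightarrow> prd a b \<in> ob"
  and pr1_ar[simp]: "a \<in> ob \<Longrightarrow> b \<in> ob \<Longrightarrow> pr1 a b \<in> ar"
  and pr1_dm[simp]: "a \<in> ob \<Longrightarrow> b \<in> ob \<Longrightarrow> dm (pr1 a b) = prd a b"
  and pr1_cd[simp]: "a \<in> ob \<Longrightarrow> b \<in> ob \<Longrightarrow> cd (pr1 a b) = a"
  and pr2_ar[simp]: "a \<in> ob \<Longrightarrow> b \<in> ob \<Longrightarrow> pr2 a b \<in> ar"
  and pr2_dm[simp]: "a \<in> ob \<Longrightarrow> b \<in> ob \<Longrightarrow> dm (pr2 a b) = prd a b"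
  and pr2_cd[simp]: "a \<in> ob \<Longrightarrow> b \<in> ob \<Longrightarrow> cd (pr2 a b) = b"
  using fp unfolding has_chosen_finite_products_def hom_iff by auto

lemma pa_ar[simp]: "f \<in> ar \<Longrightarrow> g \<in> ar \<Longrightarrow> dm f = dm g \<Longrightarrow> pa f g \<in> ar"
  and pa_dm[simp]: "f \<in> ar \<Longrightarrow> g \<in> ar \<Longrightarrow> dm f = dm g \<Longrightarrow> dm (pa f g) = dm f"
  and pa_cd[simp]: "f \<in> ar \<Longrightarrow> g \<in> ar \<Longrightarrow> dm f = dm g \<Longrightarrow> cd (pa f g) = prd (cd f) (cd g)"
  and pr1_pa[simp]: "f \<in> ar \<Longrightarrow> g \<in> ar \<Longrightarrow> dm f = dm g \<Longrightarrow> cmp (pr1 (cd f) (cd g)) (pa f g) = f"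
  and pr2_pa[simp]: "f \<in> ar \<Longrightarrow> g \<in> ar \<Longrightarrow> dm f = dm g \<Longrightarrow> cmp (pr2 (cd f) (cd g)) (pa f g) = g"
proof -
  assume a: "f \<in> ar" "g \<in> ar" "dm f = dm g"
  then have "f \<in> c_hom C (dm f) (cd f)" "g \<in> c_hom C (dm f) (cd g)" by (auto simp: hom_iff)
  then have "pa f g \<in> c_hom C (dm f) (prd (cd f) (cd g)) \<and>
        cmp (pr1 (cd f) (cd g)) (pa f g) = f \<and> cmp (pr2 (cd f) (cd g)) (pa f g) = g"
    using fp unfolding has_chosen_finite_products_def by blast
  then show "pa f g \<in> ar" "dm (pa f g) = dm f" "cd (pa f g) = prd (cd f) (cd g)"
     "cmp (pr1 (cd f) (cd g)) (pa f g) = f" "cmp (pr2 (cd f) (cd g)) (pa f g) = g"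
    by (auto simp: hom_iff)
qed

lemma pr1_pa'[simp]: "f \<in> ar \<Longrightarrow> g \<in> ar \<Longrightarrow> dm f = dm g \<Longrightarrow> cd f = a \<Longrightarrow> cd g = b \<Longrightarrow> cmp (pr1 a b) (pa f g) = f"
  and pr2_pa'[simp]: "f \<in> ar \<Longrightarrow> g \<in> ar \<Longrightarrow> dm f = dm g \<Longrightarrow> cd f = a \<Longrightarrow> cd g = b \<Longrightarrow> cmp (pr2 a b) (pa f g) = g"
  by auto

lemma pa_eta: "h \<in> ar \<Longrightarrow> a \<in> ob \<Longrightarrow> b \<in> ob \<Longrightarrow> cd h = prd a b \<Longrightarrow>
   pa (cmp (pr1 a b) h) (cmp (pr2 a b) h) = h"
  using fp unfolding has_chosen_finite_products_def hom_iff by metis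

lemma pa_eqI: "h \<in> ar \<Longrightarrow> h' \<in> ar \<Longrightarrow> a \<in> ob \<Longrightarrow> b \<in> ob \<Longrightarrow> cd h = prd a b \<Longrightarrow> cd h' = prd a b \<Longrightarrow>
   cmp (pr1 a b) h = cmp (pr1 a b) h' \<Longrightarrow> cmp (pr2 a b) h = cmp (pr2 a b) h' \<Longrightarrow> h = h'"
  by (metis pa_eta)

lemma pa_eqI': "h \<in> ar \<Longrightarrow> a \<in> ob \<Longrightarrow> b \<in> ob \<Longrightarrow> cd h = prd a b \<Longrightarrow>
   f \<in> ar \<Longrightarrow> g \<in> ar \<Longrightarrow> dm f = dm g \<Longrightarrow> cd f = a \<Longrightarrow> cd g = b \<Longrightarrow>
   cmp (pr1 a b) h = f \<Longrightarrow> cmp (pr2 a b) h = g \<Longrightarrow> h = pa f g"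
  by (metis pa_eta)

lemma pa_cmp: "f \<in> ar \<Longrightarrow> g \<in> ar \<Longrightarrow> dm f = dm g \<Longrightarrow> k \<in> ar \<Longrightarrow> cd k = dm f \<Longrightarrow>
   cmp (pa f g) k = pa (cmp f k) (cmp g k)"
  apply (rule pa_eqI'[where a="cd f" and b="cd g"])
  apply (simp_all add: assoc[symmetric])
  done

lemma tn_def': "tn f g = pa (cmp f (pr1 (dm f) (dm g))) (cmp g (pr2 (dm f) (dm g)))"
  by (simp add: c_tensor_def)

lemma tn_ar[simp]: "f \<in> ar \<Longrightarrow> g \<in> ar \<Longrightarrow> tn f g \<in> ar"
  and tn_dm[simp]: "f \<in> ar \<Longrightarrow> g \<in> ar \<Longrightarrow> dm (tn f g) = prd (dm f) (dm g)"
  and tn_cd[simp]: "f \<in> ar \<Longrightarrow> g \<in> ar \<Longrightarrow> cd (tn f g) = prd (cd f) (cd g)"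
  by (simp_all add: tn_def')

lemma pr1_tn[simp]: "f \<in> ar \<Longrightarrow> g \<in> ar \<Longrightarrow> cd f = a \<Longrightarrow> cd g = b \<Longrightarrow>
    cmp (pr1 a b) (tn f g) = cmp f (pr1 (dm f) (dm g))"
  and pr2_tn[simp]: "f \<in> ar \<Longrightarrow> g \<in> ar \<Longrightarrow> cd f = a \<Longrightarrow> cd g = b \<Longrightarrow>
    cmp (pr2 a b) (tn f g) = cmp g (pr2 (dm f) (dm g))"
  by (simp_all add: tn_def')

lemma tn_pa: "f \<in> ar \<Longrightarrow> g \<in> ar \<Longrightarrow> h \<in> ar \<Longrightarrow> k \<in> ar \<Longrightarrow> dm h = dm k \<Longrightarrow>
   cd h = dm f \<Longrightarrow> cd k = dm g \<Longrightarrow> cmp (tn f g) (pa h k) = pa (cmp f h) (cmp g k)"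
  by (simp add: tn_def' pa_cmp assoc)

lemma W_ar: "f \<in> W \<Longrightarrow> f \<in> ar"
  and iso_W: "c_iso C f \<Longrightarrow> f \<in> W"
  and W_cmp: "f \<in> W \<Longrightarrow> g \<in> W \<Longrightarrow> cd f = dm g \<Longrightarrow> cmp g f \<in> W"
  and W_2of3_r: "f \<in> W \<Longrightarrow> g \<in> ar \<Longrightarrow> cd f = dm g \<Longrightarrow> cmp g f \<in> W \<Longrightarrow> g \<in> W"
  and W_2of3_l: "f \<in> ar \<Longrightarrow> g \<in> W \<Longrightarrow> cd f = dm g \<Longrightarrow> cmp g f \<in> W \<Longrightarrow> f \<in> W"
  and W_tn: "f \<in> W \<Longrightarrow> g \<in> W \<Longrightarrow> tn f g \<in> W"
  using ccw unfolding cartesian_cat_with_equivalences_def by blast+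

lemma isoI: "f \<in> ar \<Longrightarrow> g \<in> ar \<Longrightarrow> dm g = cd f \<Longrightarrow> cd g = dm f \<Longrightarrow>
   cmp g f = cid (dm f) \<Longrightarrow> cmp f g = cid (cd f) \<Longrightarrow> f \<in> W"
  by (rule iso_W) (auto simp: c_iso_def hom_iff)

lemma id_W: "a \<in> ob \<Longrightarrow> cid a \<in> W"
  by (rule isoI[where g="cid a"]) auto

end


lemma phi_plus_hom: "f \<in> phi_hom a a' \<Longrightarrow> g \<in> phi_hom b b' \<Longrightarrow> phi_plus a a' f g \<in> phi_hom (a+b) (a'+b')"
  unfolding phi_hom_def phi_plus_def by (auto simp: Pi_iff intro: trans_less_add1)

locale hobj = ccw +
  fixes XO XM xi xi0
  assumes H: "hty_obj C W (XO, XM, xi, xi0)"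
begin

lemma
  XO_ob[simp]: "XO n \<in> ob" and
  XM_hom: "f \<in> phi_hom m n \<Longrightarrow> XM m n f \<in> c_hom C (XO m) (XO n)" and
  XM_ext: "(\<And>i. i < m \<Longrightarrow> f i = g i) \<Longrightarrow> XM m n f = XM m n g" and
  XM_undef: "f \<notin> phi_hom m n \<Longrightarrow> XM m n f = undefined" and
  XM_id: "XM n n id = cid (XO n)" and
  XM_comp: "f \<in> phi_hom m n \<Longrightarrow> g \<in> phi_hom n k \<Longrightarrow> XM m k (g \<circ> f) = cmp (XM n k g) (XM m n f)" and
  xi_hom: "xi m n \<in> c_hom C (XO (m + n)) (prd (XO m) (XO n))" and
  xi0_hom: "xi0 \<in> c_hom C (XO 0) one" and
  xi_nat: "f \<in> phi_hom m m' \<Longrightarrow> g \<in> phi_hom n n' \<Longrightarrow>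
        cmp (xi m' n') (XM (m + n) (m' + n') (phi_plus m m' f g)) =
        cmp (tn (XM m m' f) (XM n n' g)) (xi m n)" and
  xi_coassoc: "cmp (tn (xi l m) (cid (XO n))) (xi (l + m) n) =
        cmp (c_assoc C (XO l) (XO m) (XO n)) (cmp (tn (cid (XO l)) (xi m n)) (xi l (m + n)))" and
  xi_counit1: "cmp (tn xi0 (cid (XO n))) (xi 0 n) = pa (bg (XO n)) (cid (XO n))" and
  xi_counit2: "cmp (tn (cid (XO n)) xi0) (xi n 0) = pa (cid (XO n)) (bg (XO n))" and
  xi_sym: "cmp (c_swap C (XO m) (XO n)) (xi m n) = cmp (xi n m) (XM (m + n) (n + m) (phi_twist m n))" and
  xi0_W: "xi0 \<in> W" and xi_W: "xi m n \<in> W"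
  using H unfolding hty_obj_def phi_functor_def by auto

lemma XM_ar[simp]: "f \<in> phi_hom m n \<Longrightarrow> XM m n f \<in> ar"
  and XM_dm[simp]: "f \<in> phi_hom m n \<Longrightarrow> dm (XM m n f) = XO m"
  and XM_cd[simp]: "f \<in> phi_hom m n \<Longrightarrow> cd (XM m n f) = XO n"
  using XM_hom by (auto simp: hom_iff)

lemma xi_ar[simp]: "xi m n \<in> ar" and xi_dm[simp]: "dm (xi m n) = XO (m + n)"
  and xi_cd[simp]: "cd (xi m n) = prd (XO m) (XO n)"
  using xi_hom by (auto simp: hom_iff)

lemma xi0_ar[simp]: "xi0 \<in> ar" and xi0_dm[simp]: "dm xi0 = XO 0" and xi0_cd[simp]: "cd xi0 = one"
  using xi0_hom by (auto simp: hom_iff)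

definition pi :: "nat \<Rightarrow> nat \<Rightarrow> 'b" where "pi a b = cmp (pr1 (XO a) (XO b)) (xi a b)"
definition pi2 :: "nat \<Rightarrow> nat \<Rightarrow> 'b" where "pi2 a b = cmp (pr2 (XO a) (XO b)) (xi a b)"

lemma pi_ar[simp]: "pi a b \<in> ar" and pi_dm[simp]: "dm (pi a b) = XO (a + b)" and pi_cd[simp]: "cd (pi a b) = XO a"
  and pi2_ar[simp]: "pi2 a b \<in> ar" and pi2_dm[simp]: "dm (pi2 a b) = XO (a + b)" and pi2_cd[simp]: "cd (pi2 a b) = XO b"
  by (simp_all add: pi_def pi2_def)

lemma xi_eq: "xi a b = pa (pi a b) (pi2 a b)"
  by (simp add: pi_def pi2_def pa_eta)

lemma pi_nat: "f \<in> phi_hom a a' \<Longrightarrow> g \<in> phi_hom b b' \<Longrightarrow>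
  cmp (pi a' b') (XM (a+b) (a'+b') (phi_plus a a' f g)) = cmp (XM a a' f) (pi a b)"
  and pi2_nat: "f \<in> phi_hom a a' \<Longrightarrow> g \<in> phi_hom b b' \<Longrightarrow>
  cmp (pi2 a' b') (XM (a+b) (a'+b') (phi_plus a a' f g)) = cmp (XM b b' g) (pi2 a b)"
proof -
  assume f: "f \<in> phi_hom a a'" and g: "g \<in> phi_hom b b'"
  note h = phi_plus_hom[OF f g]
  have "cmp (pi a' b') (XM (a+b) (a'+b') (phi_plus a a' f g))
     = cmp (pr1 (XO a') (XO b')) (cmp (tn (XM a a' f) (XM b b' g)) (xi a b))"
    unfolding pi_def using f g h by (simp add: assoc xi_nat)
  also have "\<dots> = cmp (XM a a' f) (pi a b)" unfolding pi_def using f g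
    by (simp add: assoc[symmetric])
  finally show "cmp (pi a' b') (XM (a+b) (a'+b') (phi_plus a a' f g)) = cmp (XM a a' f) (pi a b)" .
  have "cmp (pi2 a' b') (XM (a+b) (a'+b') (phi_plus a a' f g))
     = cmp (pr2 (XO a') (XO b')) (cmp (tn (XM a a' f) (XM b b' g)) (xi a b))"
    unfolding pi2_def using f g h by (simp add: assoc xi_nat)
  also have "\<dots> = cmp (XM b b' g) (pi2 a b)" unfolding pi2_def using f g
    by (simp add: assoc[symmetric])
  finally show "cmp (pi2 a' b') (XM (a+b) (a'+b') (phi_plus a a' f g)) = cmp (XM b b' g) (pi2 a b)" .
qed

lemma pi_coassoc: "cmp (pi l m) (pi (l + m) n) = pi l (m + n)"
proof -
  let ?L = "cmp (tn (xi l m) (cid (XO n))) (xi (l + m) n)"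
  let ?R = "cmp (c_assoc C (XO l) (XO m) (XO n)) (cmp (tn (cid (XO l)) (xi m n)) (xi l (m + n)))"
  let ?p = "cmp (pr1 (XO l) (XO m)) (pr1 (prd (XO l) (XO m)) (XO n))"
  have pa1: "?p \<in> ar" "dm ?p = prd (prd (XO l) (XO m)) (XO n)" by simp_all
  have "cmp ?p ?L = cmp (pi l m) (pi (l + m) n)"
    unfolding pi_def by (simp add: assoc[symmetric]) (simp add: assoc)
  moreover
  have as: "c_assoc C (XO l) (XO m) (XO n) \<in> ar"
    "dm (c_assoc C (XO l) (XO m) (XO n)) = prd (XO l) (prd (XO m) (XO n))"
    "cd (c_assoc C (XO l) (XO m) (XO n)) = prd (prd (XO l) (XO m)) (XO n)"
    unfolding c_assoc_def by simp_all
  have as2: "cmp ?p (c_assoc C (XO l) (XO m) (XO n)) = pr1 (XO l) (prd (XO m) (XO n))"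
    unfolding c_assoc_def by (simp add: assoc)
  have "cmp ?p ?R = pi l (m + n)"
    unfolding pi_def using as as2 by (simp add: assoc[symmetric])
  moreover have "?L = ?R" by (rule xi_coassoc)
  ultimately show ?thesis by simp
qed

lemma pi_zero: "pi a 0 = cid (XO a)"
proof -
  have "cmp (pr1 (XO a) one) (cmp (tn (cid (XO a)) xi0) (xi a 0)) = cid (XO a)"
    by (simp add: xi_counit2)
  then show ?thesis unfolding pi_def by (simp add: assoc[symmetric])
qed

lemma pi2_zero: "pi2 0 n = cid (XO n)"
proof -
  have "cmp (pr2 one (XO n)) (cmp (tn xi0 (cid (XO n))) (xi 0 n)) = cid (XO n)"
    by (simp add: xi_counit1)
  then show ?thesis unfolding pi2_def by (simp add: assoc[symmetric])
qed

lemma twist_hom: "phi_twist a b \<in> phi_hom (a + b) (b + a)"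
  unfolding phi_hom_def phi_twist_def by auto

lemma pi_twist: "cmp (pi b a) (XM (a + b) (b + a) (phi_twist a b)) = pi2 a b"
proof -
  have sw: "c_swap C (XO a) (XO b) \<in> ar" "cd (c_swap C (XO a) (XO b)) = prd (XO b) (XO a)"
    "dm (c_swap C (XO a) (XO b)) = prd (XO a) (XO b)"
    "cmp (pr1 (XO b) (XO a)) (c_swap C (XO a) (XO b)) = pr2 (XO a) (XO b)"
    unfolding c_swap_def by simp_all
  have "cmp (pi b a) (XM (a + b) (b + a) (phi_twist a b))
      = cmp (pr1 (XO b) (XO a)) (cmp (xi b a) (XM (a + b) (b + a) (phi_twist a b)))"
    unfolding pi_def using twist_hom by (simp add: assoc)
  also have "\<dots> = cmp (pr1 (XO b) (XO a)) (cmp (c_swap C (XO a) (XO b)) (xi a b))"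
    by (simp add: xi_sym)
  also have "\<dots> = pi2 a b" unfolding pi2_def using sw by (simp add: assoc[symmetric])
  finally show ?thesis .
qed

end


lemma perm_ex: "\<exists>q. bij_betw q {..<a} {..<a} \<and> (\<forall>i<a. q i < card {i. i<a \<and> P i} \<longleftrightarrow> P i)"
proof -
  define D where "D = {i. i<a \<and> P i}"
  define E where "E = {i. i<a \<and> \<not> P i}"
  define k where "k = card D"
  have fD: "finite D" and fE: "finite E" by (auto simp: D_def E_def)
  have DE: "D \<union> E = {..<a}" "D \<inter> E = {}" by (auto simp: D_def E_def)
  then have cDE: "card D + card E = a" using fD fE card_Un_disjoint[OF fD fE] by simp
  obtain u where u: "bij_betw u D {0..<k}" using ex_bij_betw_finite_nat[OF fD] k_def by auto
  obtain v where v: "bij_betw v E {0..<card E}" using ex_bij_betw_finite_nat[OF fE] by auto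
  define q where "q i = (if P i then u i else k + v i)" for i
  have "bij_betw q D {0..<k}"
    using u by (rule bij_betw_cong[THEN iffD1, rotated]) (auto simp: q_def D_def)
  moreover have "bij_betw (\<lambda>i. k + v i) E {k..<a}"
  proof -
    have "bij_betw ((+) k) {0..<card E} {k..<a}"
      using cDE k_def by (simp add: bij_betw_def inj_on_def) (auto simp: image_def intro!: exI[where x="_ - k"])
    from bij_betw_trans[OF v this] show ?thesis by (simp add: comp_def)
  qed
  then have "bij_betw q E {k..<a}"
    by (rule bij_betw_cong[THEN iffD1, rotated]) (auto simp: q_def E_def)
  ultimately have "bij_betw q (D \<union> E) ({0..<k} \<union> {k..<a})"
    by (rule bij_betw_combine) auto
  moreover have "{0..<k} \<union> {k..<a} = {..<a}" using cDE k_def by auto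
  ultimately have b: "bij_betw q {..<a} {..<a}" using DE by simp
  have "\<forall>i<a. q i < k \<longleftrightarrow> P i"
  proof (intro allI impI)
    fix i assume i: "i < a"
    show "q i < k \<longleftrightarrow> P i"
    proof (cases "P i")
      case True then have "i \<in> D" using i by (simp add: D_def)
      then show ?thesis using u True by (auto simp: q_def bij_betw_def)
    qed (simp add: q_def)
  qed
  then show ?thesis using b by (auto simp: k_def D_def)
qed


lemma bij_phi: "bij_betw p {..<m} {..<m} \<Longrightarrow> p \<in> phi_hom m m"
  unfolding phi_hom_def bij_betw_def by auto

context ccw begin

lemma cmp2: "cmp A B = cmp E D \<Longrightarrow> A \<in> ar \<Longrightarrow> B \<in> ar \<Longrightarrow> E \<in> ar \<Longrightarrow> D \<in> ar \<Longrightarrow> x \<in> ar \<Longrightarrow>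
  cd B = dm A \<Longrightarrow> cd D = dm E \<Longrightarrow> cd x = dm B \<Longrightarrow> cd x = dm D \<Longrightarrow> cmp A (cmp B x) = cmp E (cmp D x)"
  proof -
  assume a: "cmp A B = cmp E D" "A \<in> ar" "B \<in> ar" "E \<in> ar" "D \<in> ar" "x \<in> ar" "cd B = dm A" "cd D = dm E" "cd x = dm B" "cd x = dm D"
  have "cmp A (cmp B x) = cmp (cmp A B) x" using a(2-) by (simp add: assoc)
  also have "\<dots> = cmp (cmp E D) x" by (simp only: a(1))
  also have "\<dots> = cmp E (cmp D x)" using a(2-) by (simp add: assoc)
  finally show ?thesis .
qed

end

context hobj begin

definition valid :: "nat \<Rightarrow> nat \<Rightarrow> (nat \<Rightarrow> nat) \<Rightarrow> nat \<Rightarrow> (nat \<Rightarrow> nat) \<Rightarrow> (nat \<Rightarrow> nat) \<Rightarrow> bool" where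
 "valid m n g k p h \<longleftrightarrow> k \<le> m \<and> bij_betw p {..<m} {..<m} \<and> h \<in> phi_hom k n \<and>
    (\<forall>i<m. g (Suc i) \<noteq> 0 \<longleftrightarrow> p i < k) \<and> (\<forall>i<m. p i < k \<longrightarrow> h (p i) = g (Suc i) - 1)"

definition vl where "vl m n k p h = cmp (XM k n h) (cmp (pi k (m - k)) (XM m m p))"

lemma vl_ar: "valid m n g k p h \<Longrightarrow> vl m n k p h \<in> ar \<and> dm (vl m n k p h) = XO m \<and> cd (vl m n k p h) = XO n"
  unfolding valid_def vl_def by (auto dest: bij_phi)

lemma valid_card: "valid m n g k p h \<Longrightarrow> k = card {i. i<m \<and> g (Suc i) \<noteq> 0}"
proof -
  assume v: "valid m n g k p h"
  let ?D = "{i. i<m \<and> g (Suc i) \<noteq> 0}"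
  have b: "bij_betw p {..<m} {..<m}" and km: "k \<le> m" using v by (auto simp: valid_def)
  have "inj_on p ?D" using b by (auto simp: bij_betw_def inj_on_def)
  moreover have "p ` ?D = {..<k}"
  proof
    show "p ` ?D \<subseteq> {..<k}" using v by (auto simp: valid_def)
    show "{..<k} \<subseteq> p ` ?D"
    proof
      fix j assume "j \<in> {..<k}"
      then have "j \<in> p ` {..<m}" using b km by (auto simp: bij_betw_def)
      then obtain i where "i < m" "j = p i" by auto
      then show "j \<in> p ` ?D" using v \<open>j \<in> {..<k}\<close> by (auto simp: valid_def)
    qed
  qed
  ultimately show ?thesis by (metis card_image card_lessThan)
qed

lemma valid_ex: "g \<in> gam_hom m n \<Longrightarrow> \<exists>k p h. valid m n g k p h"
proof -
  assume g: "g \<in> gam_hom m n"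
  define k where "k = card {i. i<m \<and> g (Suc i) \<noteq> 0}"
  obtain q where q1: "bij_betw q {..<m} {..<m}" and q2: "\<And>i. i<m \<Longrightarrow> q i < k \<longleftrightarrow> g (Suc i) \<noteq> 0"
    using perm_ex[of m "\<lambda>i. g (Suc i) \<noteq> 0"] unfolding k_def by blast
  have km: "k \<le> m" unfolding k_def by (rule order_trans[OF card_mono[of "{..<m}"]]) auto
  define qi where "qi = inv_into {..<m} q"
  define h where "h j = g (Suc (qi j)) - 1" for j
  have inv1: "qi j < m" if "j < m" for j
    using bij_betw_apply[OF bij_betw_inv_into[OF q1]] that unfolding qi_def by simp
  have inv2: "q (qi j) = j" if "j < m" for j
    using bij_betw_inv_into_right[OF q1] that unfolding qi_def by simp
  have invl: "qi (q i) = i" if "i < m" for i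
    using bij_betw_inv_into_left[OF q1] that unfolding qi_def by simp
  have "h \<in> phi_hom k n"
    unfolding phi_hom_def
  proof
    fix j assume "j \<in> {..<k}"
    then have j: "j < m" "j < k" using km by auto
    have i: "qi j < m" "q (qi j) = j" using inv1 inv2 j by auto
    then have "g (Suc (qi j)) \<noteq> 0" using q2[of "qi j"] j by simp
    moreover have "g (Suc (qi j)) \<le> n" using g i by (auto simp: gam_hom_def Pi_iff)
    ultimately show "h j \<in> {..<n}" by (simp add: h_def)
  qed
  moreover have "\<forall>i<m. q i < k \<longrightarrow> h (q i) = g (Suc i) - 1" using invl by (simp add: h_def)
  ultimately have "valid m n g k q h"
    unfolding valid_def using km q1 q2 by auto
  then show ?thesis by blast
qed

end


definition shift :: "(nat \<Rightarrow> nat) \<Rightarrow> nat \<Rightarrow> nat" where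
  "shift f = (\<lambda>i. if i = 0 then 0 else Suc (f (i - 1)))"

definition gpi1 :: "nat \<Rightarrow> nat \<Rightarrow> nat \<Rightarrow> nat" where
  "gpi1 a b = (\<lambda>i. if i \<le> a then i else 0)"

definition gpi2 :: "nat \<Rightarrow> nat \<Rightarrow> nat \<Rightarrow> nat" where
  "gpi2 a b = (\<lambda>i. if i \<le> a then 0 else i - a)"

lemma shift_gam: "f \<in> phi_hom m n \<Longrightarrow> shift f \<in> gam_hom m n"
  unfolding shift_def gam_hom_def phi_hom_def by (auto simp: Pi_iff Suc_le_eq)

lemma gpi1_gam: "gpi1 a b \<in> gam_hom (a + b) a"
  unfolding gpi1_def gam_hom_def by auto

lemma gpi2_gam: "gpi2 a b \<in> gam_hom (a + b) b"
  unfolding gpi2_def gam_hom_def by auto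

lemma bij_twist: "bij_betw (phi_twist a b) {..<a+b} {..<a+b}"
proof -
  have "inj_on (phi_twist a b) {..<a+b}" unfolding inj_on_def phi_twist_def by auto
  moreover have "phi_twist a b ` {..<a+b} = {..<a+b}"
  proof
    show "phi_twist a b ` {..<a+b} \<subseteq> {..<a+b}" unfolding phi_twist_def by auto
    show "{..<a+b} \<subseteq> phi_twist a b ` {..<a+b}"
    proof
      fix j assume j: "j \<in> {..<a+b}"
      show "j \<in> phi_twist a b ` {..<a+b}"
      proof (cases "j < b")
        case True then have "phi_twist a b (j + a) = j" unfolding phi_twist_def by simp
        then show ?thesis using True by (metis add.commute image_eqI lessThan_iff nat_add_left_cancel_less)
      next
        case False then have "phi_twist a b (j - b) = j" "j - b < a + b" using j unfolding phi_twist_def by auto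
        then show ?thesis by (metis image_eqI lessThan_iff)
      qed
    qed
  qed
  ultimately show ?thesis by (simp add: bij_betw_def)
qed
context ccw begin

lemma cmp1: "cmp A B = E \<Longrightarrow> A \<in> ar \<Longrightarrow> B \<in> ar \<Longrightarrow> x \<in> ar \<Longrightarrow>
  cd B = dm A \<Longrightarrow> cd x = dm B \<Longrightarrow> cmp A (cmp B x) = cmp E x"
  by (simp add: assoc[symmetric])

end

context hobj begin
lemma valid_uniq:
  assumes v1: "valid m n g k p1 h1" and v2: "valid m n g k2 p2 h2"
  shows "vl m n k p1 h1 = vl m n k2 p2 h2"
proof -
  have kk: "k2 = k" using valid_card[OF v1] valid_card[OF v2] by simp
  have km: "k \<le> m" and b1: "bij_betw p1 {..<m} {..<m}" and b2: "bij_betw p2 {..<m} {..<m}"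
    and h1: "h1 \<in> phi_hom k n" and h2: "h2 \<in> phi_hom k n"
    and c1: "\<And>i. i<m \<Longrightarrow> g (Suc i) \<noteq> 0 \<longleftrightarrow> p1 i < k"
    and c2: "\<And>i. i<m \<Longrightarrow> g (Suc i) \<noteq> 0 \<longleftrightarrow> p2 i < k"
    and d1: "\<And>i. i<m \<Longrightarrow> p1 i < k \<Longrightarrow> h1 (p1 i) = g (Suc i) - 1"
    and d2: "\<And>i. i<m \<Longrightarrow> p2 i < k \<Longrightarrow> h2 (p2 i) = g (Suc i) - 1"
    using v1 v2 kk unfolding valid_def by auto
  define qi where "qi = inv_into {..<m} p1"
  have inv1: "qi j < m" if "j < m" for j
    using bij_betw_apply[OF bij_betw_inv_into[OF b1]] that unfolding qi_def by simp
  have inv2: "p1 (qi j) = j" if "j < m" for j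
    using bij_betw_inv_into_right[OF b1] that unfolding qi_def by simp
  have invl: "qi (p1 i) = i" if "i < m" for i
    using bij_betw_inv_into_left[OF b1] that unfolding qi_def by simp
  have p1lt: "p1 i < m" if "i < m" for i using bij_betw_apply[OF b1] that by simp
  have p2lt: "p2 i < m" if "i < m" for i using bij_betw_apply[OF b2] that by simp
  define r where "r j = p2 (qi j)" for j
  define r2 where "r2 i = r (i + k) - k" for i
  have rlt: "r j < k \<longleftrightarrow> j < k" if "j < m" for j
  proof -
    have "r j < k \<longleftrightarrow> g (Suc (qi j)) \<noteq> 0" unfolding r_def using c2 inv1 that by simp
    also have "\<dots> \<longleftrightarrow> p1 (qi j) < k" using c1 inv1 that by simp
    finally show ?thesis using inv2 that by simp
  qed
  have rm: "r j < m" if "j < m" for j unfolding r_def using p2lt inv1 that by simp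
  have rk: "r \<in> phi_hom k k" unfolding phi_hom_def using rlt km by auto
  have r2h: "r2 \<in> phi_hom (m - k) (m - k)"
    unfolding phi_hom_def
  proof
    fix i assume "i \<in> {..<m - k}"
    then have i: "i + k < m" by auto
    then have "r (i + k) < m" "k \<le> r (i + k)" using rm rlt[of "i+k"] by auto
    then show "r2 i \<in> {..<m - k}" unfolding r2_def by auto
  qed
  have rmm: "r \<in> phi_hom m m" unfolding phi_hom_def using rm by auto
  have XMp2: "XM m m p2 = cmp (XM m m r) (XM m m p1)"
  proof -
    have "XM m m p2 = XM m m (r \<circ> p1)" by (rule XM_ext) (simp add: r_def invl)
    also have "\<dots> = cmp (XM m m r) (XM m m p1)" by (rule XM_comp[OF bij_phi[OF b1] rmm])
    finally show ?thesis .
  qed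
  have XMr: "XM m m r = XM (k + (m - k)) (k + (m - k)) (phi_plus k k r r2)"
  proof -
    have rge: "k \<le> r i" if "i < m" "\<not> i < k" for i using rlt[of i] that by simp
    show ?thesis using km by (simp, intro XM_ext) (auto simp: phi_plus_def r2_def rge)
  qed
  have pn: "cmp (pi k (m - k)) (XM m m r) = cmp (XM k k r) (pi k (m - k))"
    unfolding XMr by (rule pi_nat[OF rk r2h])
  have hh: "XM k n h1 = cmp (XM k n h2) (XM k k r)"
  proof -
    have "XM k n h1 = XM k n (h2 \<circ> r)"
    proof (rule XM_ext)
      fix j assume j: "j < k"
      then have jm: "j < m" using km by simp
      have "p1 (qi j) < k" using inv2 jm j by simp
      then have "g (Suc (qi j)) \<noteq> 0" using c1 inv1 jm by blast
      then have "p2 (qi j) < k" using c2 inv1 jm by blast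
      then show "h1 j = (h2 \<circ> r) j" using d1[of "qi j"] d2[of "qi j"] inv1 inv2 jm j
        by (simp add: r_def)
    qed
    also have "\<dots> = cmp (XM k n h2) (XM k k r)" by (rule XM_comp[OF rk h2])
    finally show ?thesis .
  qed
  have ph: "p1 \<in> phi_hom m m" "p2 \<in> phi_hom m m" using b1 b2 by (auto intro: bij_phi)
  have "vl m n k2 p2 h2 = cmp (XM k n h2) (cmp (pi k (m - k)) (cmp (XM m m r) (XM m m p1)))"
    unfolding vl_def kk XMp2 ..
  also have "\<dots> = cmp (XM k n h2) (cmp (XM k k r) (cmp (pi k (m - k)) (XM m m p1)))"
    using cmp2[OF pn] km rk rmm ph by simp
  also have "\<dots> = cmp (XM k n h1) (cmp (pi k (m - k)) (XM m m p1))"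
    unfolding hh using km rk rmm ph h2 by (simp add: assoc)
  finally show ?thesis unfolding vl_def by simp
qed

definition YM where
  "YM m n g = (if g \<in> gam_hom m n then
      (case (SOME x. case x of (k, p, h) \<Rightarrow> valid m n g k p h) of (k, p, h) \<Rightarrow> vl m n k p h)
    else undefined)"

lemma YM_eq: "g \<in> gam_hom m n \<Longrightarrow> valid m n g k p h \<Longrightarrow> YM m n g = vl m n k p h"
proof -
  assume g: "g \<in> gam_hom m n" and v: "valid m n g k p h"
  have "\<exists>x. case x of (k, p, h) \<Rightarrow> valid m n g k p h" using v by auto
  then have "case (SOME x. case x of (k, p, h) \<Rightarrow> valid m n g k p h) of (k, p, h) \<Rightarrow> valid m n g k p h"
    by (rule someI_ex)
  then obtain k' p' h' where e: "(SOME x. case x of (k, p, h) \<Rightarrow> valid m n g k p h) = (k', p', h')"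
    and v': "valid m n g k' p' h'" by (auto split: prod.splits)
  show ?thesis unfolding YM_def using g e valid_uniq[OF v' v] by simp
qed

lemma YM_hom: "g \<in> gam_hom m n \<Longrightarrow> YM m n g \<in> ar \<and> dm (YM m n g) = XO m \<and> cd (YM m n g) = XO n"
  using valid_ex[of g m n] YM_eq vl_ar by metis

lemma YM_ar[simp]: "g \<in> gam_hom m n \<Longrightarrow> YM m n g \<in> ar"
  and YM_dm[simp]: "g \<in> gam_hom m n \<Longrightarrow> dm (YM m n g) = XO m"
  and YM_cd[simp]: "g \<in> gam_hom m n \<Longrightarrow> cd (YM m n g) = XO n"
  using YM_hom by auto

lemma YM_undef: "g \<notin> gam_hom m n \<Longrightarrow> YM m n g = undefined"
  by (simp add: YM_def)

lemma YM_ext: assumes "\<And>i. i \<le> m \<Longrightarrow> f i = g i" shows "YM m n f = YM m n g"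
proof -
  have gh: "f \<in> gam_hom m n \<longleftrightarrow> g \<in> gam_hom m n" using assms by (auto simp: gam_hom_def Pi_iff)
  have vv: "valid m n f k p h \<longleftrightarrow> valid m n g k p h" for k p h
    using assms unfolding valid_def by (auto simp: Suc_le_eq)
  show ?thesis
  proof (cases "f \<in> gam_hom m n")
    case True
    then obtain k p h where "valid m n f k p h" using valid_ex by blast
    then show ?thesis using YM_eq True gh vv by metis
  qed (simp add: YM_undef gh)
qed

lemma id_gam: "id \<in> gam_hom n n" by (auto simp: gam_hom_def)

lemma YM_id: "YM n n id = cid (XO n)"
proof -
  have "valid n n id n id id" unfolding valid_def by (auto simp: phi_hom_def)
  then have "YM n n id = vl n n n id id" by (rule YM_eq[OF id_gam])
  also have "\<dots> = cid (XO n)" unfolding vl_def using XM_id pi_zero by simp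
  finally show ?thesis .
qed

lemma YM_shift: "f \<in> phi_hom m n \<Longrightarrow> YM m n (shift f) = XM m n f"
proof -
  assume f: "f \<in> phi_hom m n"
  have "valid m n (shift f) m id f" unfolding valid_def using f by (auto simp: shift_def)
  then have "YM m n (shift f) = vl m n m id f" by (rule YM_eq[OF shift_gam[OF f]])
  also have "\<dots> = XM m n f" unfolding vl_def using XM_id pi_zero f by simp
  finally show ?thesis .
qed

lemma YM_gpi1: "YM (a + b) a (gpi1 a b) = pi a b"
proof -
  have "valid (a + b) a (gpi1 a b) a id id" unfolding valid_def by (auto simp: gpi1_def phi_hom_def)
  then have "YM (a + b) a (gpi1 a b) = vl (a + b) a a id id" by (rule YM_eq[OF gpi1_gam])
  also have "\<dots> = pi a b" unfolding vl_def using XM_id by simp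
  finally show ?thesis .
qed

lemma YM_gpi2: "YM (a + b) b (gpi2 a b) = pi2 a b"
proof -
  have "valid (a + b) b (gpi2 a b) b (phi_twist a b) id" unfolding valid_def
    using bij_twist by (auto simp: gpi2_def phi_hom_def phi_twist_def)
  then have "YM (a + b) b (gpi2 a b) = vl (a + b) b b (phi_twist a b) id" by (rule YM_eq[OF gpi2_gam])
  also have "\<dots> = cmp (pi b a) (XM (a + b) (b + a) (phi_twist a b))"
    unfolding vl_def using XM_id twist_hom[of a b] by (simp add: add.commute)
  also have "\<dots> = pi2 a b" by (rule pi_twist)
  finally show ?thesis .
qed

lemma pull:
  assumes f: "f \<in> phi_hom a n" and bn: "b \<le> n"
  shows "\<exists>j q f1. j \<le> a \<and> bij_betw q {..<a} {..<a} \<and> f1 \<in> phi_hom j b \<and>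
    (\<forall>i<a. q i < j \<longleftrightarrow> f i < b) \<and> (\<forall>i<a. q i < j \<longrightarrow> f1 (q i) = f i) \<and>
    cmp (pi b (n - b)) (XM a n f) = cmp (XM j b f1) (cmp (pi j (a - j)) (XM a a q))"
proof -
  define j where "j = card {i. i<a \<and> f i < b}"
  obtain q where q1: "bij_betw q {..<a} {..<a}" and q2: "\<And>i. i<a \<Longrightarrow> q i < j \<longleftrightarrow> f i < b"
    using perm_ex[of a "\<lambda>i. f i < b"] unfolding j_def by blast
  have ja: "j \<le> a" unfolding j_def by (rule order_trans[OF card_mono[of "{..<a}"]]) auto
  define qi where "qi = inv_into {..<a} q"
  have inv1: "qi x < a" if "x < a" for x
    using bij_betw_apply[OF bij_betw_inv_into[OF q1]] that unfolding qi_def by simp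
  have inv2: "q (qi x) = x" if "x < a" for x
    using bij_betw_inv_into_right[OF q1] that unfolding qi_def by simp
  have invl: "qi (q i) = i" if "i < a" for i
    using bij_betw_inv_into_left[OF q1] that unfolding qi_def by simp
  have flt: "f i < n" if "i < a" for i using f that by (auto simp: phi_hom_def)
  define f' where "f' x = f (qi x)" for x
  define f2 where "f2 x = f' (x + j) - b" for x
  have f'lt: "f' x < b \<longleftrightarrow> x < j" if "x < a" for x
    unfolding f'_def using q2[of "qi x"] inv1 inv2 that by simp
  have f'h: "f' \<in> phi_hom a n" unfolding phi_hom_def f'_def using flt inv1 by auto
  have f1h: "f' \<in> phi_hom j b" unfolding phi_hom_def using f'lt ja by auto
  have f2h: "f2 \<in> phi_hom (a - j) (n - b)" unfolding phi_hom_def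
  proof
    fix x assume "x \<in> {..<a - j}"
    then have x: "x + j < a" by auto
    then have "f' (x + j) < n" "b \<le> f' (x + j)" using f'lt[of "x + j"] f'h by (auto simp: phi_hom_def)
    then show "f2 x \<in> {..<n - b}" unfolding f2_def by auto
  qed
  have qh: "q \<in> phi_hom a a" by (rule bij_phi[OF q1])
  have e1: "XM a n f = cmp (XM a n f') (XM a a q)"
  proof -
    have "XM a n f = XM a n (f' \<circ> q)" by (rule XM_ext) (simp add: f'_def invl)
    also have "\<dots> = cmp (XM a n f') (XM a a q)" by (rule XM_comp[OF qh f'h])
    finally show ?thesis .
  qed
  have e2: "XM a n f' = XM (j + (a - j)) (b + (n - b)) (phi_plus j b f' f2)"
  proof -
    have ge: "b \<le> f' x" if "x < a" "\<not> x < j" for x using f'lt[of x] that by simp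
    show ?thesis using ja bn by (simp, intro XM_ext) (auto simp: phi_plus_def f2_def ge)
  qed
  have pn: "cmp (pi b (n - b)) (XM a n f') = cmp (XM j b f') (pi j (a - j))"
    unfolding e2 by (rule pi_nat[OF f1h f2h])
  have "cmp (pi b (n - b)) (XM a n f) = cmp (XM j b f') (cmp (pi j (a - j)) (XM a a q))"
    unfolding e1 using cmp2[OF pn] ja bn f'h f1h qh by simp
  moreover have "\<forall>i<a. q i < j \<longrightarrow> f' (q i) = f i" using invl by (simp add: f'_def)
  ultimately show ?thesis using ja q1 f1h q2 by blast
qed

lemma gam_comp: "f \<in> gam_hom m n \<Longrightarrow> g \<in> gam_hom n l \<Longrightarrow> g \<circ> f \<in> gam_hom m l"
  unfolding gam_hom_def by auto

lemma YM_comp: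
  assumes f: "f \<in> gam_hom m n" and g: "g \<in> gam_hom n l"
  shows "YM m l (g \<circ> f) = cmp (YM n l g) (YM m n f)"
proof -
  obtain k1 p1 h1 where v1: "valid m n f k1 p1 h1" using valid_ex[OF f] by blast
  obtain k2 p2 h2 where v2: "valid n l g k2 p2 h2" using valid_ex[OF g] by blast
  have k1m: "k1 \<le> m" and b1: "bij_betw p1 {..<m} {..<m}" and h1: "h1 \<in> phi_hom k1 n"
    and c1: "\<And>i. i<m \<Longrightarrow> f (Suc i) \<noteq> 0 \<longleftrightarrow> p1 i < k1"
    and d1: "\<And>i. i<m \<Longrightarrow> p1 i < k1 \<Longrightarrow> h1 (p1 i) = f (Suc i) - 1"
    using v1 unfolding valid_def by auto
  have k2n: "k2 \<le> n" and b2: "bij_betw p2 {..<n} {..<n}" and h2: "h2 \<in> phi_hom k2 l"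
    and c2: "\<And>i. i<n \<Longrightarrow> g (Suc i) \<noteq> 0 \<longleftrightarrow> p2 i < k2"
    and d2: "\<And>i. i<n \<Longrightarrow> p2 i < k2 \<Longrightarrow> h2 (p2 i) = g (Suc i) - 1"
    using v2 unfolding valid_def by auto
  have p1h: "p1 \<in> phi_hom m m" and p2h: "p2 \<in> phi_hom n n" using b1 b2 by (auto intro: bij_phi)
  have Fh: "p2 \<circ> h1 \<in> phi_hom k1 n" using h1 p2h by (auto simp: phi_hom_def)
  obtain j q f1 where jk: "j \<le> k1" and qb: "bij_betw q {..<k1} {..<k1}" and f1h: "f1 \<in> phi_hom j k2"
    and qc: "\<And>i. i<k1 \<Longrightarrow> q i < j \<longleftrightarrow> (p2 \<circ> h1) i < k2"
    and qd: "\<And>i. i<k1 \<Longrightarrow> q i < j \<Longrightarrow> f1 (q i) = (p2 \<circ> h1) i"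
    and pe: "cmp (pi k2 (n - k2)) (XM k1 n (p2 \<circ> h1)) = cmp (XM j k2 f1) (cmp (pi j (k1 - j)) (XM k1 k1 q))"
    using pull[OF Fh k2n] by blast
  have qh: "q \<in> phi_hom k1 k1" by (rule bij_phi[OF qb])
  define P where "P i = (if i < k1 then q i else i)" for i
  have Pb: "bij_betw P {..<m} {..<m}"
  proof -
    have "bij_betw P {..<k1} {..<k1}" using qb by (rule bij_betw_cong[THEN iffD1, rotated]) (simp add: P_def)
    moreover have "bij_betw P {k1..<m} {k1..<m}" by (rule bij_betw_cong[THEN iffD1, rotated, of id]) (auto simp: P_def)
    ultimately have "bij_betw P ({..<k1} \<union> {k1..<m}) ({..<k1} \<union> {k1..<m})"
      by (rule bij_betw_combine) auto
    moreover have "{..<k1} \<union> {k1..<m} = {..<m}" using k1m by auto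
    ultimately show ?thesis by simp
  qed
  have h1lt: "h1 x < n" if "x < k1" for x using h1 that by (auto simp: phi_hom_def)
  have g0: "g 0 = 0" using g by (simp add: gam_hom_def)
  have fsuc: "f (Suc i) = Suc (h1 (p1 i))" if "i < m" "p1 i < k1" for i
    using c1[of i] d1[of i] that by simp
  have v: "valid m l (g \<circ> f) j (P \<circ> p1) (h2 \<circ> f1)"
    unfolding valid_def
  proof (intro conjI allI impI)
    show "j \<le> m" using jk k1m by simp
    show "bij_betw (P \<circ> p1) {..<m} {..<m}" using b1 Pb by (rule bij_betw_trans)
    show "h2 \<circ> f1 \<in> phi_hom j l" using f1h h2 by (auto simp: phi_hom_def)
  next
    fix i assume i: "i < m"
    show "(g \<circ> f) (Suc i) \<noteq> 0 \<longleftrightarrow> (P \<circ> p1) i < j"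
    proof (cases "p1 i < k1")
      case True
      have "(g \<circ> f) (Suc i) \<noteq> 0 \<longleftrightarrow> p2 (h1 (p1 i)) < k2"
        using fsuc[OF i True] c2[of "h1 (p1 i)"] h1lt[OF True] by simp
      also have "\<dots> \<longleftrightarrow> q (p1 i) < j" using qc[OF True] by simp
      finally show ?thesis using True by (simp add: P_def)
    next
      case False
      then have "f (Suc i) = 0" using c1 i by blast
      then show ?thesis using False jk g0 by (simp add: P_def)
    qed
  next
    fix i assume i: "i < m" and Pi: "(P \<circ> p1) i < j"
    then have pk: "p1 i < k1" using jk by (auto simp: P_def split: if_splits)
    then have qj: "q (p1 i) < j" using Pi by (simp add: P_def)
    then have lt: "p2 (h1 (p1 i)) < k2" using qc[OF pk] by simp
    have "(h2 \<circ> f1) ((P \<circ> p1) i) = h2 (p2 (h1 (p1 i)))" using qd[OF pk qj] pk by (simp add: P_def)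
    also have "\<dots> = g (Suc (h1 (p1 i))) - 1" using d2[OF h1lt[OF pk] lt] .
    also have "\<dots> = (g \<circ> f) (Suc i) - 1" using fsuc[OF i pk] by simp
    finally show "(h2 \<circ> f1) ((P \<circ> p1) i) = (g \<circ> f) (Suc i) - 1" .
  qed
  have YMgf: "YM m l (g \<circ> f) = vl m l j (P \<circ> p1) (h2 \<circ> f1)" by (rule YM_eq[OF gam_comp[OF f g] v])
  have Ph: "P \<circ> p1 \<in> phi_hom m m" using Pb by (auto intro: bij_betw_trans[OF b1] bij_phi)
  have idh: "id \<in> phi_hom (m - k1) (m - k1)" by (auto simp: phi_hom_def)
  have e3: "XM m m (P \<circ> p1) = cmp (XM (k1 + (m - k1)) (k1 + (m - k1)) (phi_plus k1 k1 q id)) (XM m m p1)"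
  proof -
    have "XM m m (P \<circ> p1) = XM m m (phi_plus k1 k1 q id \<circ> p1)"
      by (rule XM_ext) (auto simp: P_def phi_plus_def)
    also have "\<dots> = cmp (XM m m (phi_plus k1 k1 q id)) (XM m m p1)"
      using phi_plus_hom[OF qh idh] k1m by (intro XM_comp[OF p1h]) simp
    finally show ?thesis using k1m by simp
  qed
  have pn: "cmp (pi k1 (m - k1)) (XM (k1 + (m - k1)) (k1 + (m - k1)) (phi_plus k1 k1 q id)) = cmp (XM k1 k1 q) (pi k1 (m - k1))"
    by (rule pi_nat[OF qh idh])
  have pn': "cmp (pi k1 (m - k1)) (XM m m (phi_plus k1 k1 q id)) = cmp (XM k1 k1 q) (pi k1 (m - k1))"
    using pn k1m by simp
  have co: "cmp (pi j (k1 - j)) (pi k1 (m - k1)) = pi j (m - j)"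
    using pi_coassoc[of j "k1 - j" "m - k1"] jk k1m by simp
  have plh: "phi_plus k1 k1 q id \<in> phi_hom m m" using phi_plus_hom[OF qh idh] k1m by simp
  have e4: "XM k1 n (p2 \<circ> h1) = cmp (XM n n p2) (XM k1 n h1)" by (rule XM_comp[OF h1 p2h])
  have e5: "XM j l (h2 \<circ> f1) = cmp (XM k2 l h2) (XM j k2 f1)" by (rule XM_comp[OF f1h h2])
  have pe': "cmp (pi k2 (n - k2)) (cmp (XM n n p2) (XM k1 n h1)) = cmp (XM j k2 f1) (cmp (pi j (k1 - j)) (XM k1 k1 q))"
    using pe unfolding e4 .
  have "cmp (YM n l g) (YM m n f) = cmp (vl n l k2 p2 h2) (vl m n k1 p1 h1)"
    using YM_eq[OF f v1] YM_eq[OF g v2] by simp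
  also have "\<dots> = cmp (XM k2 l h2) (cmp (pi k2 (n - k2)) (cmp (XM n n p2) (cmp (XM k1 n h1)
       (cmp (pi k1 (m - k1)) (XM m m p1)))))"
    unfolding vl_def using h1 h2 p1h p2h k1m k2n by (simp add: assoc)
  also have "\<dots> = cmp (XM k2 l h2) (cmp (XM j k2 f1) (cmp (pi j (k1 - j)) (cmp (XM k1 k1 q)
       (cmp (pi k1 (m - k1)) (XM m m p1)))))"
  proof -
    have "cmp (pi k2 (n - k2)) (cmp (cmp (XM n n p2) (XM k1 n h1)) (cmp (pi k1 (m - k1)) (XM m m p1)))
       = cmp (XM j k2 f1) (cmp (cmp (pi j (k1 - j)) (XM k1 k1 q)) (cmp (pi k1 (m - k1)) (XM m m p1)))"
      using cmp2[OF pe'] h1 p2h qh f1h jk k1m k2n p1h by simp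
    then show ?thesis using h1 p2h qh f1h jk k1m k2n p1h by (simp add: assoc)
  qed
  also have "\<dots> = cmp (XM k2 l h2) (cmp (XM j k2 f1) (cmp (pi j (k1 - j)) (cmp (pi k1 (m - k1))
       (cmp (XM m m (phi_plus k1 k1 q id)) (XM m m p1)))))"
    using cmp2[OF pn', symmetric] qh plh p1h k1m by simp
  also have "\<dots> = cmp (XM k2 l h2) (cmp (XM j k2 f1) (cmp (pi j (m - j))
       (cmp (XM m m (phi_plus k1 k1 q id)) (XM m m p1))))"
    using cmp1[OF co] plh p1h jk k1m by simp
  also have "\<dots> = vl m l j (P \<circ> p1) (h2 \<circ> f1)"
    unfolding vl_def e5 e3 using k1m jk plh p1h f1h h2 by (simp add: assoc)
  finally show ?thesis using YMgf by simp
qed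

end


lemma rho0: "gam_rho n 0 = gpi1 1 k"
  by (auto simp: gam_rho_def gpi1_def fun_eq_iff)

lemma rhoSuc: "gam_rho (Suc n) (Suc j) = gam_rho n j \<circ> gpi2 1 n"
  by (auto simp: gam_rho_def gpi2_def fun_eq_iff)

lemma rho_gam: "gam_rho n j \<in> gam_hom n 1"
  by (auto simp: gam_rho_def gam_hom_def)

lemma rho_gam': "gam_rho n j \<in> gam_hom n (Suc 0)"
  by (auto simp: gam_rho_def gam_hom_def)

context ccw begin

lemma pow_ob[simp]: "b \<in> ob \<Longrightarrow> c_pow C b n \<in> ob"
  by (induction n) auto

lemma tuple_hom: "a \<in> ob \<Longrightarrow> b \<in> ob \<Longrightarrow> (\<And>j. fs j \<in> ar \<and> dm (fs j) = a \<and> cd (fs j) = b) \<Longrightarrow>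
  c_tuple C a fs n \<in> ar \<and> dm (c_tuple C a fs n) = a \<and> cd (c_tuple C a fs n) = c_pow C b n"
  by (induction n arbitrary: fs) auto

lemma tuple_cmp: "a \<in> ob \<Longrightarrow> b \<in> ob \<Longrightarrow> (\<And>j. fs j \<in> ar \<and> dm (fs j) = a \<and> cd (fs j) = b) \<Longrightarrow>
  k \<in> ar \<Longrightarrow> cd k = a \<Longrightarrow>
  c_tuple C (dm k) (\<lambda>j. cmp (fs j) k) n = cmp (c_tuple C a fs n) k"
proof (induction n arbitrary: fs)
  case 0
  have "cmp (bg a) k = bg (dm (cmp (bg a) k))" by (rule bg_uniq) (use 0 in simp_all)
  also have "\<dots> = bg (dm k)" using 0 by simp
  finally have calc: "cmp (bg a) k = bg (dm k)" .
  have e1: "c_tuple C (dm k) (\<lambda>j. cmp (fs j) k) 0 = bg (dm k)" by (simp only: c_tuple.simps)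
  have e2: "cmp (c_tuple C a fs 0) k = cmp (bg a) k" by (simp only: c_tuple.simps)
  show ?case unfolding e1 e2 calc ..
next
  case (Suc n)
  have "c_tuple C (dm k) (\<lambda>j. cmp (fs (Suc j)) k) n = cmp (c_tuple C a (\<lambda>j. fs (Suc j)) n) k"
    using Suc.IH[of "\<lambda>j. fs (Suc j)"] Suc.prems by blast
  then show ?case using Suc.prems tuple_hom[of a b "\<lambda>j. fs (Suc j)" n] by (simp add: pa_cmp)
qed

end

locale gfun = ccw +
  fixes YO YM
  assumes G: "gam_functor C YO YM"
begin

lemma
  YO_ob[simp]: "YO n \<in> ob" and
  YM_hom: "f \<in> gam_hom m n \<Longrightarrow> YM m n f \<in> c_hom C (YO m) (YO n)" and
  YM_ext: "(\<And>i. i \<le> m \<Longrightarrow> f i = g i) \<Longrightarrow> YM m n f = YM m n g" and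
  YM_undef: "f \<notin> gam_hom m n \<Longrightarrow> YM m n f = undefined" and
  YM_id: "YM n n id = cid (YO n)" and
  YM_comp: "f \<in> gam_hom m n \<Longrightarrow> g \<in> gam_hom n k \<Longrightarrow> YM m k (g \<circ> f) = cmp (YM n k g) (YM m n f)"
  using G unfolding gam_functor_def by auto

lemma YM_ar[simp]: "f \<in> gam_hom m n \<Longrightarrow> YM m n f \<in> ar"
  and YM_dm[simp]: "f \<in> gam_hom m n \<Longrightarrow> dm (YM m n f) = YO m"
  and YM_cd[simp]: "f \<in> gam_hom m n \<Longrightarrow> cd (YM m n f) = YO n"
  using YM_hom by (auto simp: hom_iff)

definition tup :: "nat \<Rightarrow> 'b" where
  "tup n = c_tuple C (YO n) (\<lambda>j. YM n 1 (gam_rho n j)) n"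

lemma tup_hom: "tup n \<in> ar \<and> dm (tup n) = YO n \<and> cd (tup n) = c_pow C (YO 1) n"
  unfolding tup_def by (rule tuple_hom) (auto simp: rho_gam')

lemma tup_ar[simp]: "tup n \<in> ar" and tup_dm[simp]: "dm (tup n) = YO n"
  and tup_cd[simp]: "cd (tup n) = c_pow C (YO 1) n"
  using tup_hom by auto

lemma tup_step: "tup (Suc n) = cmp (tn (cid (YO 1)) (tup n)) (pa (YM (Suc n) 1 (gpi1 1 n)) (YM (Suc n) n (gpi2 1 n)))"
proof -
  have g1: "gpi1 1 n \<in> gam_hom (Suc n) 1" and g2: "gpi2 1 n \<in> gam_hom (Suc n) n"
    using gpi1_gam[of 1 n] gpi2_gam[of 1 n] by simp_all
  have e: "YM (Suc n) 1 (gam_rho (Suc n) (Suc j)) = cmp (YM n 1 (gam_rho n j)) (YM (Suc n) n (gpi2 1 n))" for j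
    unfolding rhoSuc by (rule YM_comp[OF g2 rho_gam])
  have "c_tuple C (YO (Suc n)) (\<lambda>j. YM (Suc n) 1 (gam_rho (Suc n) (Suc j))) n
      = c_tuple C (dm (YM (Suc n) n (gpi2 1 n))) (\<lambda>j. cmp (YM n 1 (gam_rho n j)) (YM (Suc n) n (gpi2 1 n))) n"
    unfolding e using g2 by simp
  also have "\<dots> = cmp (tup n) (YM (Suc n) n (gpi2 1 n))"
    unfolding tup_def using g2 by (intro tuple_cmp[where b="YO 1"]) (auto simp: rho_gam')
  finally have t: "c_tuple C (YO (Suc n)) (\<lambda>j. YM (Suc n) 1 (gam_rho (Suc n) (Suc j))) n = cmp (tup n) (YM (Suc n) n (gpi2 1 n))" .
  show ?thesis unfolding tup_def[of "Suc n"] using g1 g2 t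
    by (simp add: rho0[of _ n] tn_pa)
qed

end

lemma (in hobj) gam_functor_Y: "gam_functor C XO YM"
  unfolding gam_functor_def
proof (intro conjI allI impI)
  show "\<And>m n f. f \<in> gam_hom m n \<Longrightarrow> YM m n f \<in> c_hom C (XO m) (XO n)" by (simp add: hom_iff)
  show "\<And>m n f g. \<forall>i\<le>m. f i = g i \<Longrightarrow> YM m n f = YM m n g" by (rule YM_ext) blast
  show "\<And>m n f. f \<notin> gam_hom m n \<Longrightarrow> YM m n f = undefined" by (rule YM_undef)
  show "\<And>n. YM n n id = cid (XO n)" by (rule YM_id)
  show "\<And>m n k f g. f \<in> gam_hom m n \<Longrightarrow> g \<in> gam_hom n k \<Longrightarrow> YM m k (g \<circ> f) = cmp (YM n k g) (YM m n f)"
    by (rule YM_comp)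
qed simp

sublocale hobj \<subseteq> Yx: gfun C W XO YM
  by (rule gfun.intro[OF ccw_axioms]) (rule gfun_axioms.intro[OF gam_functor_Y])

context hobj begin

lemma special_Fo: "special_obj C W (XO, YM)"
proof -
  have "Yx.tup n \<in> W" for n
  proof (induction n)
    case 0
    have "xi0 = bg (XO 0)" by (metis bg_uniq xi0_ar xi0_cd xi0_dm)
    then show ?case using xi0_W unfolding Yx.tup_def by simp
  next
    case (Suc n)
    have e: "pa (YM (Suc n) 1 (gpi1 1 n)) (YM (Suc n) n (gpi2 1 n)) = xi 1 n"
      using YM_gpi1[of 1 n] YM_gpi2[of 1 n] xi_eq[of 1 n] by simp
    have t: "Yx.tup (Suc n) = cmp (tn (cid (XO 1)) (Yx.tup n)) (xi 1 n)"
      unfolding e[symmetric] by (rule Yx.tup_step)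
    have w: "tn (cid (XO 1)) (Yx.tup n) \<in> W" by (rule W_tn[OF id_W[OF XO_ob] Suc])
    show ?case unfolding t by (rule W_cmp[OF xi_W w]) simp
  qed
  then show ?thesis unfolding special_obj_def using gam_functor_Y by (simp add: Yx.tup_def)
qed

end


lemma shift_comp: "shift (g \<circ> f) = shift g \<circ> shift f"
  by (auto simp: shift_def fun_eq_iff)

lemma twist_hom_g: "phi_twist a b \<in> phi_hom (a + b) (b + a)"
  unfolding phi_hom_def phi_twist_def by auto

lemma shift_id: "shift id = id"
  by (auto simp: shift_def fun_eq_iff)

context ccw begin

lemma c_assoc_ar[simp]: "a \<in> ob \<Longrightarrow> b \<in> ob \<Longrightarrow> c \<in> ob \<Longrightarrow> c_assoc C a b c \<in> ar"
  and c_assoc_dm[simp]: "a \<in> ob \<Longrightarrow> b \<in> ob \<Longrightarrow> c \<in> ob \<Longrightarrow> dm (c_assoc C a b c) = prd a (prd b c)"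
  and c_assoc_cd[simp]: "a \<in> ob \<Longrightarrow> b \<in> ob \<Longrightarrow> c \<in> ob \<Longrightarrow> cd (c_assoc C a b c) = prd (prd a b) c"
  unfolding c_assoc_def by simp_all

lemma pa_id: "a \<in> ob \<Longrightarrow> b \<in> ob \<Longrightarrow> pa (pr1 a b) (pr2 a b) = cid (prd a b)"
  using pa_eta[of "cid (prd a b)" a b] by simp

lemma assoc_pa: "x \<in> ar \<Longrightarrow> y \<in> ar \<Longrightarrow> z \<in> ar \<Longrightarrow> dm x = dm y \<Longrightarrow> dm y = dm z \<Longrightarrow>
  cd x = a \<Longrightarrow> cd y = b \<Longrightarrow> cd z = c \<Longrightarrow>
  cmp (c_assoc C a b c) (pa x (pa y z)) = pa (pa x y) z"
  using cd_ob[of x] cd_ob[of y] cd_ob[of z] unfolding c_assoc_def by (simp add: pa_cmp assoc)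

lemma c_assoc_W: "a \<in> ob \<Longrightarrow> b \<in> ob \<Longrightarrow> c \<in> ob \<Longrightarrow> c_assoc C a b c \<in> W"
proof -
  assume ob: "a \<in> ob" "b \<in> ob" "c \<in> ob"
  define P where "P = prd (prd a b) c"
  define g where "g = pa (cmp (pr1 a b) (pr1 (prd a b) c)) (pa (cmp (pr2 a b) (pr1 (prd a b) c)) (pr2 (prd a b) c))"
  have g: "g \<in> ar" "dm g = P" "cd g = prd a (prd b c)" unfolding g_def P_def using ob by simp_all
  have "cmp (c_assoc C a b c) g = pa (pa (cmp (pr1 a b) (pr1 (prd a b) c)) (cmp (pr2 a b) (pr1 (prd a b) c))) (pr2 (prd a b) c)"
    unfolding g_def using ob by (intro assoc_pa) simp_all
  also have "pa (cmp (pr1 a b) (pr1 (prd a b) c)) (cmp (pr2 a b) (pr1 (prd a b) c)) = pr1 (prd a b) c"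
    using ob by (simp add: pa_cmp[symmetric] pa_id)
  finally have e1: "cmp (c_assoc C a b c) g = cid (cd (c_assoc C a b c))" using ob by (simp add: pa_id)
  have e2: "cmp g (c_assoc C a b c) = cid (dm (c_assoc C a b c))"
  proof -
    let ?Q = "prd a (prd b c)"
    have "cmp g (c_assoc C a b c) = pa (pr1 a (prd b c)) (pa (cmp (pr1 b c) (pr2 a (prd b c))) (cmp (pr2 b c) (pr2 a (prd b c))))"
      unfolding g_def c_assoc_def using ob by (simp add: pa_cmp assoc)
    also have "pa (cmp (pr1 b c) (pr2 a (prd b c))) (cmp (pr2 b c) (pr2 a (prd b c))) = pr2 a (prd b c)"
      using ob by (simp add: pa_cmp[symmetric] pa_id)
    finally show ?thesis using ob by (simp add: pa_id)
  qed
  show ?thesis using ob g e1 e2 P_def by (intro isoI[where g=g]) simp_all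
qed

lemma swap_pa: "x \<in> ar \<Longrightarrow> y \<in> ar \<Longrightarrow> dm x = dm y \<Longrightarrow> cd x = a \<Longrightarrow> cd y = b \<Longrightarrow>
  cmp (c_swap C a b) (pa x y) = pa y x"
  using cd_ob[of x] cd_ob[of y] unfolding c_swap_def by (simp add: pa_cmp)

lemma pa_bg_id_W: "a \<in> ob \<Longrightarrow> pa (bg a) (cid a) \<in> W"
proof -
  assume a: "a \<in> ob"
  have p: "pr1 one a = bg (dm (pr1 one a))" by (rule bg_uniq) (use a in simp_all)
  have d: "dm (pr1 one a) = prd one a" using a by simp
  note p' = p[unfolded d, symmetric]
  have "cmp (bg a) (pr2 one a) = bg (prd one a)"
    by (rule bg_uniq[THEN trans]) (use a in simp_all)
  also have "bg (prd one a) = pr1 one a" by (rule p')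
  finally have e: "cmp (bg a) (pr2 one a) = pr1 one a" .
  have "cmp (pa (bg a) (cid a)) (pr2 one a) = cid (prd one a)"
    using a e by (simp add: pa_cmp pa_id)
  then show ?thesis using a by (intro isoI[where g="pr2 one a"]) simp_all
qed

end

context gfun begin

lemma YM_comp_eq:
  "f \<in> gam_hom m n \<Longrightarrow> g \<in> gam_hom n k \<Longrightarrow> f' \<in> gam_hom m n' \<Longrightarrow> g' \<in> gam_hom n' k \<Longrightarrow>
   (\<And>i. i \<le> m \<Longrightarrow> g (f i) = g' (f' i)) \<Longrightarrow> cmp (YM n k g) (YM m n f) = cmp (YM n' k g') (YM m n' f')"
  unfolding YM_comp[symmetric] by (rule YM_ext) simp

lemma YM_comp_eq1:
  "f \<in> gam_hom m n \<Longrightarrow> g \<in> gam_hom n k \<Longrightarrow> h \<in> gam_hom m k \<Longrightarrow>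
   (\<And>i. i \<le> m \<Longrightarrow> g (f i) = h i) \<Longrightarrow> cmp (YM n k g) (YM m n f) = YM m k h"
  unfolding YM_comp[symmetric] by (rule YM_ext) simp

definition XMg where "XMg m n f = (if f \<in> phi_hom m n then YM m n (shift f) else undefined)"
definition xig where "xig m n = pa (YM (m + n) m (gpi1 m n)) (YM (m + n) n (gpi2 m n))"
definition xi0g where "xi0g = bg (YO 0)"

lemma xig_ar[simp]: "xig m n \<in> ar" and xig_dm[simp]: "dm (xig m n) = YO (m + n)"
  and xig_cd[simp]: "cd (xig m n) = prd (YO m) (YO n)"
  unfolding xig_def using gpi1_gam[of m n] gpi2_gam[of m n] by simp_all

lemma XMg_ar[simp]: "f \<in> phi_hom m n \<Longrightarrow> XMg m n f \<in> ar"
  and XMg_dm[simp]: "f \<in> phi_hom m n \<Longrightarrow> dm (XMg m n f) = YO m"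
  and XMg_cd[simp]: "f \<in> phi_hom m n \<Longrightarrow> cd (XMg m n f) = YO n"
  unfolding XMg_def using shift_gam by simp_all

lemma phi_functor_g: "phi_functor C YO XMg"
  unfolding phi_functor_def
proof (intro conjI allI impI)
  show "\<And>m n f. f \<in> phi_hom m n \<Longrightarrow> XMg m n f \<in> c_hom C (YO m) (YO n)" by (simp add: hom_iff)
  show "\<And>m n f g. \<forall>i<m. f i = g i \<Longrightarrow> XMg m n f = XMg m n g"
  proof -
    fix m n :: nat and f g :: "nat \<Rightarrow> nat" assume e: "\<forall>i<m. f i = g i"
    have "f \<in> phi_hom m n \<longleftrightarrow> g \<in> phi_hom m n" using e by (auto simp: phi_hom_def Pi_iff)
    moreover have "YM m n (shift f) = YM m n (shift g)"
      by (rule YM_ext) (use e in \<open>auto simp: shift_def\<close>)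
    ultimately show "XMg m n f = XMg m n g" by (simp add: XMg_def)
  qed
  show "\<And>m n f. f \<notin> phi_hom m n \<Longrightarrow> XMg m n f = undefined" by (simp add: XMg_def)
  show "\<And>n. XMg n n id = cid (YO n)"
    by (simp add: XMg_def shift_id YM_id phi_hom_def)
  show "\<And>m n k f g. f \<in> phi_hom m n \<Longrightarrow> g \<in> phi_hom n k \<Longrightarrow> XMg m k (g \<circ> f) = cmp (XMg n k g) (XMg m n f)"
  proof -
    fix m n k :: nat and f g :: "nat \<Rightarrow> nat" assume f: "f \<in> phi_hom m n" and g: "g \<in> phi_hom n k"
    have "g \<circ> f \<in> phi_hom m k" using f g by (auto simp: phi_hom_def)
    then show "XMg m k (g \<circ> f) = cmp (XMg n k g) (XMg m n f)"
      using f g by (simp add: XMg_def shift_comp YM_comp shift_gam)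
  qed
qed simp

lemma xig_nat:
  assumes f: "f \<in> phi_hom m m'" and g: "g \<in> phi_hom n n'"
  shows "cmp (xig m' n') (XMg (m + n) (m' + n') (phi_plus m m' f g)) = cmp (tn (XMg m m' f) (XMg n n' g)) (xig m n)"
proof -
  note P = phi_plus_hom[OF f g]
  have sP: "shift (phi_plus m m' f g) \<in> gam_hom (m + n) (m' + n')" by (rule shift_gam[OF P])
  have sf: "shift f \<in> gam_hom m m'" and sg: "shift g \<in> gam_hom n n'" using shift_gam f g by auto
  have fl: "\<And>i. i < m \<Longrightarrow> f i < m'" and gl: "\<And>i. i < n \<Longrightarrow> g i < n'" using f g by (auto simp: phi_hom_def)
  have i1: "gpi1 m' n' (shift (phi_plus m m' f g) i) = shift f (gpi1 m n i)" if "i \<le> m + n" for i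
    using fl[of "i - 1"] that unfolding gpi1_def shift_def phi_plus_def by auto
  have i2: "gpi2 m' n' (shift (phi_plus m m' f g) i) = shift g (gpi2 m n i)" if "i \<le> m + n" for i
    using fl[of "i - 1"] that unfolding gpi2_def shift_def phi_plus_def by (auto simp: Suc_diff_Suc)
  have "cmp (xig m' n') (XMg (m + n) (m' + n') (phi_plus m m' f g))
     = pa (cmp (YM (m' + n') m' (gpi1 m' n')) (YM (m + n) (m' + n') (shift (phi_plus m m' f g))))
          (cmp (YM (m' + n') n' (gpi2 m' n')) (YM (m + n) (m' + n') (shift (phi_plus m m' f g))))"
    unfolding xig_def XMg_def using P sP gpi1_gam gpi2_gam by (simp add: pa_cmp)
  also have "\<dots> = pa (cmp (YM m m' (shift f)) (YM (m + n) m (gpi1 m n))) (cmp (YM n n' (shift g)) (YM (m + n) n (gpi2 m n)))"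
    using YM_comp_eq[OF sP gpi1_gam gpi1_gam sf i1] YM_comp_eq[OF sP gpi2_gam gpi2_gam sg i2] by simp
  also have "\<dots> = cmp (tn (XMg m m' f) (XMg n n' g)) (xig m n)"
    unfolding xig_def XMg_def using f g sf sg gpi1_gam gpi2_gam by (simp add: tn_pa)
  finally show ?thesis .
qed

lemma xig_coassoc:
  "cmp (tn (xig l m) (cid (YO n))) (xig (l + m) n) =
   cmp (c_assoc C (YO l) (YO m) (YO n)) (cmp (tn (cid (YO l)) (xig m n)) (xig l (m + n)))"
proof -
  have lmn: "l + m + n = l + (m + n)" by simp
  define A1 where "A1 = YM (l + (m + n)) (l + m) (gpi1 (l + m) n)"
  define B1 where "B1 = YM (l + (m + n)) n (gpi2 (l + m) n)"
  define A2 where "A2 = YM (l + (m + n)) l (gpi1 l (m + n))"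
  define B2 where "B2 = YM (l + (m + n)) (m + n) (gpi2 l (m + n))"
  define a1 where "a1 = YM (l + m) l (gpi1 l m)"
  define a2 where "a2 = YM (l + m) m (gpi2 l m)"
  define b1 where "b1 = YM (m + n) m (gpi1 m n)"
  define b2 where "b2 = YM (m + n) n (gpi2 m n)"
  have gA1: "gpi1 (l + m) n \<in> gam_hom (l + (m + n)) (l + m)" using gpi1_gam[of "l + m" n] by (simp add: add.assoc)
  have gB1: "gpi2 (l + m) n \<in> gam_hom (l + (m + n)) n" using gpi2_gam[of "l + m" n] by (simp add: add.assoc)
  note gA2 = gpi1_gam[of l "m + n"] and gB2 = gpi2_gam[of l "m + n"]
  note ga1 = gpi1_gam[of l m] and ga2 = gpi2_gam[of l m] and gb1 = gpi1_gam[of m n] and gb2 = gpi2_gam[of m n]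
  have e1: "cmp a1 A1 = A2" unfolding a1_def A1_def A2_def
    by (rule YM_comp_eq1[OF gA1 ga1 gA2]) (auto simp: gpi1_def)
  have e2: "cmp a2 A1 = cmp b1 B2" unfolding a2_def A1_def b1_def B2_def
    by (rule YM_comp_eq[OF gA1 ga2 gB2 gb1]) (auto simp: gpi1_def gpi2_def)
  have e3: "cmp b2 B2 = B1" unfolding b2_def B2_def B1_def
    by (rule YM_comp_eq1[OF gB2 gb2 gB1]) (auto simp: gpi2_def)
  have h: "A1 \<in> ar" "dm A1 = YO (l + (m + n))" "cd A1 = YO (l + m)"
    "B1 \<in> ar" "dm B1 = YO (l + (m + n))" "cd B1 = YO n"
    "A2 \<in> ar" "dm A2 = YO (l + (m + n))" "cd A2 = YO l"
    "B2 \<in> ar" "dm B2 = YO (l + (m + n))" "cd B2 = YO (m + n)"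
    "a1 \<in> ar" "dm a1 = YO (l + m)" "cd a1 = YO l"
    "a2 \<in> ar" "dm a2 = YO (l + m)" "cd a2 = YO m"
    "b1 \<in> ar" "dm b1 = YO (m + n)" "cd b1 = YO m"
    "b2 \<in> ar" "dm b2 = YO (m + n)" "cd b2 = YO n"
    unfolding A1_def B1_def A2_def B2_def a1_def a2_def b1_def b2_def
    using gA1 gB1 gA2 gB2 ga1 ga2 gb1 gb2 by simp_all
  have xl: "xig l m = pa a1 a2" "xig (l + m) n = pa A1 B1" "xig m n = pa b1 b2" "xig l (m + n) = pa A2 B2"
    unfolding xig_def a1_def a2_def A1_def B1_def b1_def b2_def A2_def B2_def lmn by simp_all
  have "cmp (tn (xig l m) (cid (YO n))) (xig (l + m) n) = pa (pa (cmp a1 A1) (cmp a2 A1)) B1"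
    unfolding xl using h by (simp add: tn_pa pa_cmp)
  also have "\<dots> = pa (pa A2 (cmp b1 B2)) (cmp b2 B2)" unfolding e1 e2 e3 ..
  also have "\<dots> = cmp (c_assoc C (YO l) (YO m) (YO n)) (pa A2 (pa (cmp b1 B2) (cmp b2 B2)))"
    using h by (intro assoc_pa[symmetric]) simp_all
  also have "\<dots> = cmp (c_assoc C (YO l) (YO m) (YO n)) (cmp (tn (cid (YO l)) (xig m n)) (xig l (m + n)))"
    unfolding xl using h by (simp add: tn_pa pa_cmp)
  finally show ?thesis .
qed

lemma xig_counit1: "cmp (tn xi0g (cid (YO n))) (xig 0 n) = pa (bg (YO n)) (cid (YO n))"
proof -
  have g1: "gpi1 0 n \<in> gam_hom n 0" using gpi1_gam[of 0 n] by simp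
  have g2: "gpi2 0 n \<in> gam_hom n n" using gpi2_gam[of 0 n] by simp
  have e: "YM n n (gpi2 0 n) = cid (YO n)" using YM_ext[of n "gpi2 0 n" id n] YM_id by (simp add: gpi2_def)
  have b: "cmp (bg (YO 0)) (YM n 0 (gpi1 0 n)) = bg (YO n)"
    by (rule bg_uniq[THEN trans]) (use g1 in simp_all)
  show ?thesis unfolding xig_def xi0g_def using g1 g2 by (simp add: tn_pa e b)
qed

lemma xig_counit2: "cmp (tn (cid (YO n)) xi0g) (xig n 0) = pa (cid (YO n)) (bg (YO n))"
proof -
  have g1: "gpi1 n 0 \<in> gam_hom n n" using gpi1_gam[of n 0] by simp
  have g2: "gpi2 n 0 \<in> gam_hom n 0" using gpi2_gam[of n 0] by simp
  have e: "YM n n (gpi1 n 0) = cid (YO n)" using YM_ext[of n "gpi1 n 0" id n] YM_id by (simp add: gpi1_def)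
  have b: "cmp (bg (YO 0)) (YM n 0 (gpi2 n 0)) = bg (YO n)"
    by (rule bg_uniq[THEN trans]) (use g2 in simp_all)
  show ?thesis unfolding xig_def xi0g_def using g1 g2 by (simp add: tn_pa e b)
qed

lemma xig_sym: "cmp (c_swap C (YO m) (YO n)) (xig m n) = cmp (xig n m) (XMg (m + n) (n + m) (phi_twist m n))"
proof -
  have tw: "shift (phi_twist m n) \<in> gam_hom (m + n) (n + m)" by (rule shift_gam[OF twist_hom_g])
  have i1: "gpi1 n m (shift (phi_twist m n) i) = gpi2 m n i" if "i \<le> m + n" for i
    using that unfolding gpi1_def gpi2_def shift_def phi_twist_def by auto
  have i2: "gpi2 n m (shift (phi_twist m n) i) = gpi1 m n i" if "i \<le> m + n" for i
    using that unfolding gpi1_def gpi2_def shift_def phi_twist_def by auto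
  have "cmp (xig n m) (XMg (m + n) (n + m) (phi_twist m n))
     = pa (cmp (YM (n + m) n (gpi1 n m)) (YM (m + n) (n + m) (shift (phi_twist m n))))
          (cmp (YM (n + m) m (gpi2 n m)) (YM (m + n) (n + m) (shift (phi_twist m n))))"
    unfolding xig_def XMg_def using twist_hom_g tw gpi1_gam gpi2_gam by (simp add: pa_cmp)
  also have "\<dots> = pa (YM (m + n) n (gpi2 m n)) (YM (m + n) m (gpi1 m n))"
    using YM_comp_eq1[OF tw gpi1_gam gpi2_gam i1] YM_comp_eq1[OF tw gpi2_gam gpi1_gam i2] by simp
  also have "\<dots> = cmp (c_swap C (YO m) (YO n)) (xig m n)"
    unfolding xig_def using gpi1_gam gpi2_gam by (simp add: swap_pa)
  finally show ?thesis by simp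
qed

end

locale gobj = gfun +
  assumes sp: "special_obj C W (YO, YM)"
begin

lemma tup_W: "tup n \<in> W"
  using sp unfolding special_obj_def tup_def by auto

lemma xi0g_W: "xi0g \<in> W"
  using tup_W[of 0] unfolding tup_def xi0g_def by simp

lemma xig1_W: "xig 1 n \<in> W"
proof -
  have t: "tup (Suc n) = cmp (tn (cid (YO 1)) (tup n)) (xig 1 n)"
    unfolding xig_def using tup_step by simp
  have w: "tn (cid (YO 1)) (tup n) \<in> W" by (rule W_tn[OF id_W[OF YO_ob] tup_W])
  have c: "cmp (tn (cid (YO 1)) (tup n)) (xig 1 n) \<in> W" using tup_W[of "Suc n"] unfolding t .
  show ?thesis by (rule W_2of3_l[OF xig_ar w _ c]) simp
qed

lemma xig_W: "xig m n \<in> W"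
proof (induction m arbitrary: n)
  case 0
  have w: "tn xi0g (cid (YO n)) \<in> W" by (rule W_tn[OF xi0g_W id_W[OF YO_ob]])
  show ?case
    by (rule W_2of3_l[OF xig_ar w]) (use xig_counit1[of n] pa_bg_id_W[of "YO n"] in \<open>simp_all add: xi0g_def\<close>)
next
  case (Suc m)
  have w: "tn (xig 1 m) (cid (YO n)) \<in> W" by (rule W_tn[OF xig1_W id_W[OF YO_ob]])
  have r1: "cmp (tn (cid (YO 1)) (xig m n)) (xig 1 (m + n)) \<in> W"
    by (rule W_cmp[OF xig1_W W_tn[OF id_W[OF YO_ob] Suc]]) simp
  have r: "cmp (c_assoc C (YO 1) (YO m) (YO n)) (cmp (tn (cid (YO 1)) (xig m n)) (xig 1 (m + n))) \<in> W"
    by (rule W_cmp[OF r1 c_assoc_W]) simp_all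
  have "xig (1 + m) n \<in> W"
    by (rule W_2of3_l[OF xig_ar w]) (use r xig_coassoc[of 1 m n] in simp_all)
  then show ?case by simp
qed

lemma hty_Go: "hty_obj C W (YO, XMg, xig, xi0g)"
  unfolding hty_obj_def
  using phi_functor_g xig_nat xig_coassoc xig_counit1 xig_counit2 xig_sym xi0g_W xig_W
  by (simp add: hom_iff xi0g_def)

end


locale hmor = A: hobj C W XO XM xi xi0 + B: hobj C W XO' XM' xi' xi0'
  for C :: "('o, 'm) ccat" and W XO XM xi xi0 XO' XM' xi' xi0' +
  fixes \<sigma> :: "nat \<Rightarrow> 'm"
  assumes M: "hty_mor C W (XO, XM, xi, xi0) (XO', XM', xi', xi0') \<sigma>"
begin

lemma s_hom: "\<sigma> n \<in> c_hom C (XO n) (XO' n)"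
  and s_nat: "f \<in> phi_hom m n \<Longrightarrow> c_comp C (XM' m n f) (\<sigma> m) = c_comp C (\<sigma> n) (XM m n f)"
  and s_mon: "c_comp C (xi' m n) (\<sigma> (m + n)) = c_comp C (c_tensor C (\<sigma> m) (\<sigma> n)) (xi m n)"
  using M unfolding hty_mor_def by auto

lemma s_ar[simp]: "\<sigma> n \<in> A.ar" and s_dm[simp]: "A.dm (\<sigma> n) = XO n" and s_cd[simp]: "A.cd (\<sigma> n) = XO' n"
  using s_hom by (auto simp: A.hom_iff)

lemma s_pi: "A.cmp (B.pi a b) (\<sigma> (a + b)) = A.cmp (\<sigma> a) (A.pi a b)"
proof -
  have "A.cmp (B.pi a b) (\<sigma> (a + b)) = A.cmp (A.pr1 (XO' a) (XO' b)) (A.cmp (xi' a b) (\<sigma> (a + b)))"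
    unfolding B.pi_def by (simp add: A.assoc)
  also have "\<dots> = A.cmp (A.pr1 (XO' a) (XO' b)) (A.cmp (A.tn (\<sigma> a) (\<sigma> b)) (xi a b))" by (simp add: s_mon)
  also have "\<dots> = A.cmp (\<sigma> a) (A.pi a b)" unfolding A.pi_def by (simp add: A.assoc[symmetric])
  finally show ?thesis .
qed

lemma YM_nat: "g \<in> gam_hom m n \<Longrightarrow> A.cmp (B.YM m n g) (\<sigma> m) = A.cmp (\<sigma> n) (A.YM m n g)"
proof -
  assume g: "g \<in> gam_hom m n"
  obtain k p h where v: "A.valid m n g k p h" using A.valid_ex[OF g] by blast
  have v': "B.valid m n g k p h" using v unfolding A.valid_def B.valid_def .
  have km: "k \<le> m" and ph: "p \<in> phi_hom m m" and hh: "h \<in> phi_hom k n"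
    using v unfolding A.valid_def by (auto intro: bij_phi)
  have pi': "A.cmp (B.pi k (m - k)) (\<sigma> m) = A.cmp (\<sigma> k) (A.pi k (m - k))"
    using s_pi[of k "m - k"] km by simp
  have "A.cmp (B.YM m n g) (\<sigma> m) = A.cmp (XM' k n h) (A.cmp (B.pi k (m - k)) (A.cmp (XM' m m p) (\<sigma> m)))"
    unfolding B.YM_eq[OF g v'] B.vl_def using km ph hh by (simp add: A.assoc)
  also have "\<dots> = A.cmp (XM' k n h) (A.cmp (B.pi k (m - k)) (A.cmp (\<sigma> m) (XM m m p)))"
    using s_nat[OF ph] by simp
  also have "\<dots> = A.cmp (XM' k n h) (A.cmp (\<sigma> k) (A.cmp (A.pi k (m - k)) (XM m m p)))"
    using A.cmp2[OF pi'] km ph by simp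
  also have "\<dots> = A.cmp (\<sigma> n) (A.cmp (XM k n h) (A.cmp (A.pi k (m - k)) (XM m m p)))"
    using A.cmp2[OF s_nat[OF hh]] km ph hh by simp
  also have "\<dots> = A.cmp (\<sigma> n) (A.YM m n g)"
    unfolding A.YM_eq[OF g v] A.vl_def ..
  finally show ?thesis .
qed

lemma special_mor_F: "special_mor C W (XO, A.YM) (XO', B.YM) \<sigma>"
  unfolding special_mor_def using A.special_Fo B.special_Fo s_hom YM_nat by simp

end

locale gmor = A: gobj C W YO YM + B: gobj C W YO' YM'
  for C :: "('o, 'm) ccat" and W YO YM YO' YM' +
  fixes \<tau> :: "nat \<Rightarrow> 'm"
  assumes M: "special_mor C W (YO, YM) (YO', YM') \<tau>"
begin

lemma t_hom: "\<tau> n \<in> c_hom C (YO n) (YO' n)"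
  and t_nat: "f \<in> gam_hom m n \<Longrightarrow> c_comp C (YM' m n f) (\<tau> m) = c_comp C (\<tau> n) (YM m n f)"
  using M unfolding special_mor_def by auto

lemma t_ar[simp]: "\<tau> n \<in> A.ar" and t_dm[simp]: "A.dm (\<tau> n) = YO n" and t_cd[simp]: "A.cd (\<tau> n) = YO' n"
  using t_hom by (auto simp: A.hom_iff)

lemma hty_mor_G: "hty_mor C W (YO, A.XMg, A.xig, A.xi0g) (YO', B.XMg, B.xig, B.xi0g) \<tau>"
  unfolding hty_mor_def
proof (simp only: prod.case, intro conjI allI impI)
  show "hty_obj C W (YO, A.XMg, A.xig, A.xi0g)" by (rule A.hty_Go)
  show "hty_obj C W (YO', B.XMg, B.xig, B.xi0g)" by (rule B.hty_Go)
  show "\<And>n. \<tau> n \<in> c_hom C (YO n) (YO' n)" by (rule t_hom)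
  show "\<And>m n f. f \<in> phi_hom m n \<Longrightarrow> A.cmp (B.XMg m n f) (\<tau> m) = A.cmp (\<tau> n) (A.XMg m n f)"
    unfolding A.XMg_def B.XMg_def by (simp add: t_nat shift_gam)
  show "\<And>m n. A.cmp (B.xig m n) (\<tau> (m + n)) = A.cmp (A.tn (\<tau> m) (\<tau> n)) (A.xig m n)"
    unfolding A.xig_def B.xig_def using gpi1_gam gpi2_gam by (simp add: A.pa_cmp A.tn_pa t_nat)
  show "A.cmp B.xi0g (\<tau> 0) = A.xi0g"
    unfolding A.xi0g_def B.xi0g_def by (rule A.bg_uniq[THEN trans]) simp_all
qed

end

context hobj begin

lemma Go_Fo: "(Yx.XMg, Yx.xig, Yx.xi0g) = (XM, xi, xi0)"
proof -
  have "Yx.XMg m n f = XM m n f" for m n f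
    unfolding Yx.XMg_def by (simp add: YM_shift XM_undef)
  moreover have "Yx.xig m n = xi m n" for m n
    unfolding Yx.xig_def YM_gpi1 YM_gpi2 by (rule xi_eq[symmetric])
  moreover have "Yx.xi0g = xi0" unfolding Yx.xi0g_def by (metis bg_uniq xi0_ar xi0_cd xi0_dm)
  ultimately show ?thesis by (simp add: fun_eq_iff)
qed

end

context gobj begin

lemma Fo_Go: "hobj.YM C YO XMg xig = YM"
proof -
  interpret H: hobj C W YO XMg xig xi0g
    by (rule hobj.intro[OF ccw_axioms]) (rule hobj_axioms.intro[OF hty_Go])
  have "H.YM m n g = YM m n g" for m n g
  proof (cases "g \<in> gam_hom m n")
    case True
    obtain k p h where v: "H.valid m n g k p h" using H.valid_ex[OF True] by blast
    have km: "k \<le> m" and pb: "bij_betw p {..<m} {..<m}" and ph: "p \<in> phi_hom m m" and hh: "h \<in> phi_hom k n"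
      and c: "\<And>i. i<m \<Longrightarrow> g (Suc i) \<noteq> 0 \<longleftrightarrow> p i < k"
      and d: "\<And>i. i<m \<Longrightarrow> p i < k \<Longrightarrow> h (p i) = g (Suc i) - 1"
      using v unfolding H.valid_def by (auto intro: bij_phi)
    have g1: "gpi1 k (m - k) \<in> gam_hom m k" using gpi1_gam[of k "m - k"] km by simp
    have pi: "H.pi k (m - k) = YM m k (gpi1 k (m - k))"
      unfolding H.pi_def xig_def using gpi1_gam[of k "m - k"] gpi2_gam[of k "m - k"] km by simp
    have sp: "shift p \<in> gam_hom m m" and sh: "shift h \<in> gam_hom k n" using shift_gam ph hh by auto
    have g0: "g 0 = 0" using True by (simp add: gam_hom_def)
    have "H.YM m n g = cmp (YM k n (shift h)) (cmp (YM m k (gpi1 k (m - k))) (YM m m (shift p)))"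
      unfolding H.YM_eq[OF True v] H.vl_def pi XMg_def using ph hh by simp
    also have "\<dots> = cmp (YM k n (shift h)) (YM m k (gpi1 k (m - k) \<circ> shift p))"
      using YM_comp[OF sp g1] by simp
    also have "\<dots> = YM m n (shift h \<circ> (gpi1 k (m - k) \<circ> shift p))"
      using YM_comp[OF H.gam_comp[OF sp g1] sh] by simp
    also have "\<dots> = YM m n g"
    proof (rule YM_ext)
      fix i assume i: "i \<le> m"
      show "(shift h \<circ> (gpi1 k (m - k) \<circ> shift p)) i = g i"
      proof (cases i)
        case 0 then show ?thesis using g0 by (simp add: shift_def gpi1_def)
      next
        case (Suc j)
        then have j: "j < m" using i by simp
        show ?thesis
        proof (cases "p j < k")
          case True then show ?thesis using Suc c[OF j] d[OF j] by (simp add: shift_def gpi1_def)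
        next
          case False then show ?thesis using Suc c[OF j] by (simp add: shift_def gpi1_def)
        qed
      qed
    qed
    finally show ?thesis .
  next
    case False then show ?thesis by (simp add: H.YM_undef YM_undef)
  qed
  then show ?thesis by (simp add: fun_eq_iff)
qed

end

definition FoF :: "('o, 'm) ccat \<Rightarrow> ('o, 'm) hty_obj \<Rightarrow> ('o, 'm) gam_obj" where
  "FoF C X = (case X of (XO, XM, xi, xi0) \<Rightarrow> (XO, hobj.YM C XO XM xi))"

definition GoF :: "('o, 'm) ccat \<Rightarrow> ('o, 'm) gam_obj \<Rightarrow> ('o, 'm) hty_obj" where
  "GoF C Y = (case Y of (YO, YM) \<Rightarrow> (YO, gfun.XMg YM, gfun.xig C YM, gfun.xi0g C YO))"

lemma hobjI: "cartesian_cat_with_equivalences C W \<Longrightarrow> hty_obj C W (XO, XM, xi, xi0) \<Longrightarrow> hobj C W XO XM xi xi0"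
  by (rule hobj.intro) (rule ccw.intro, assumption, rule hobj_axioms.intro)

lemma gobjI: "cartesian_cat_with_equivalences C W \<Longrightarrow> special_obj C W (YO, YM) \<Longrightarrow> gobj C W YO YM"
  by (rule gobj.intro, rule gfun.intro, rule ccw.intro, assumption, rule gfun_axioms.intro)
    (auto simp: special_obj_def intro: gobj_axioms.intro)

theorem corollary3p1p3:
  fixes C :: "('o, 'm) ccat" and W :: "'m set"
  assumes "cartesian_cat_with_equivalences C W"
  shows "hty_iso_special C W"
proof -
  note ccw = assms
  have fstF: "fst (FoF C X) = fst X" for X by (cases X) (simp add: FoF_def)
  have fstG: "fst (GoF C Y) = fst Y" for Y by (cases Y) (simp add: GoF_def)
  have F1: "hty_obj C W X \<longrightarrow> special_obj C W (FoF C X)" for X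
  proof (cases X)
    case (fields XO XM xi xi0)
    show ?thesis using hobj.special_Fo[OF hobjI[OF ccw]] by (simp add: fields FoF_def)
  qed
  have F2: "hty_mor C W X X' \<sigma> \<longrightarrow> special_mor C W (FoF C X) (FoF C X') \<sigma>" for X X' \<sigma>
  proof (cases X, cases X')
    fix XO XM xi xi0 XO' XM' xi' xi0'
    assume X: "X = (XO, XM, xi, xi0)" and X': "X' = (XO', XM', xi', xi0')"
    show ?thesis
    proof
      assume m: "hty_mor C W X X' \<sigma>"
      then have h: "hty_obj C W X" "hty_obj C W X'" by (auto simp: hty_mor_def)
      interpret hmor C W XO XM xi xi0 XO' XM' xi' xi0' \<sigma>
        by (rule hmor.intro[OF hobjI[OF ccw] hobjI[OF ccw]]) (use h m X X' in \<open>auto intro: hmor_axioms.intro\<close>)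
      show "special_mor C W (FoF C X) (FoF C X') \<sigma>" using special_mor_F by (simp add: X X' FoF_def)
    qed
  qed
  have G1: "special_obj C W Y \<longrightarrow> hty_obj C W (GoF C Y)" for Y
  proof (cases Y)
    case (Pair YO YM)
    show ?thesis using gobj.hty_Go[OF gobjI[OF ccw]] by (simp add: Pair GoF_def)
  qed
  have G2: "special_mor C W Y Y' \<tau> \<longrightarrow> hty_mor C W (GoF C Y) (GoF C Y') \<tau>" for Y Y' \<tau>
  proof (cases Y, cases Y')
    fix YO YM YO' YM'
    assume Y: "Y = (YO, YM)" and Y': "Y' = (YO', YM')"
    show ?thesis
    proof
      assume m: "special_mor C W Y Y' \<tau>"
      then have h: "special_obj C W Y" "special_obj C W Y'" by (auto simp: special_mor_def)
      interpret gmor C W YO YM YO' YM' \<tau>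
        by (rule gmor.intro[OF gobjI[OF ccw] gobjI[OF ccw]]) (use h m Y Y' in \<open>auto intro: gmor_axioms.intro\<close>)
      show "hty_mor C W (GoF C Y) (GoF C Y') \<tau>" using hty_mor_G by (simp add: Y Y' GoF_def)
    qed
  qed
  have GF: "hty_obj C W X \<longrightarrow> GoF C (FoF C X) = X" for X
  proof (cases X)
    case (fields XO XM xi xi0)
    show ?thesis using hobj.Go_Fo[OF hobjI[OF ccw]] by (simp add: fields FoF_def GoF_def)
  qed
  have FG: "special_obj C W Y \<longrightarrow> FoF C (GoF C Y) = Y" for Y
  proof (cases Y)
    case (Pair YO YM)
    show ?thesis using gobj.Fo_Go[OF gobjI[OF ccw]] by (simp add: Pair FoF_def GoF_def)
  qed
  show ?thesis
    unfolding hty_iso_special_def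
    apply (rule exI[where x="FoF C"], rule exI[where x="\<lambda>X X' \<sigma>. \<sigma>"],
           rule exI[where x="GoF C"], rule exI[where x="\<lambda>Y Y' \<tau>. \<tau>"])
    using F1 F2 G1 G2 GF FG by (simp add: hty_id_def special_id_def fstF fstG)
qed


end
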